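(* There exist constants $C\ge2$, $K$ and $M$ such that for all integers $k,k'$ with $K\le k<k'\le2k$, setting $c=c(k,k')=e^{-k/2+5k'/6}$, one can transform $\cos(kx)e^{-kt}$ into $c\cos(k'y)e^{-k't}$ within $\mathbb{T}^2\times[0,C]$ via a solution $u$ of $\ddot u+\operatorname{div}(A\nabla u)=0$ with $A$ in the regularity class $R(80,60)$. Moreover, for $t\in[0,C]$, $u=f(t)\cos(kx)+g(t)\cos(k'y)$ with $f,g\in C^2$ satisfying, for $0\le\alpha\le2$, $$|f^{(\alpha)}(t)|\le Mk^{7\alpha/3}e^{-kt},\qquad|g^{(\alpha)}(t)|\le M(k')^\alpha c\,e^{-k't/3};$$ on $[0,\frac1{100}]$, $u=\cos(kx)e^{-kt}$ and $A=\mathrm{Id}$; on $[C-\frac1{100},C]$, $u=c\cos(k'y)e^{-k't}$ and $A=\mathrm{Id}$.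
   Context: $\mathbb{T}^2=(\mathbb{R}/2\pi\mathbb{Z})^2$ with coordinates $(x,y)$; $t$ the third coordinate. $\ddot u+\operatorname{div}(A\nabla u)$ means $\partial_t^2u+\sum_{i,j\in\{x,y\}}\partial_i(A_{ij}\partial_ju)$ for a real $2\times2$ matrix function $A$. "Transform $u_1$ into $u_2$ within $\mathbb{T}^2\times[T_1,T_2]$ via $u$" means: $u$ is $C^2$, $A$ is $C^1$, $\ddot u+\operatorname{div}(A\nabla u)=0$ on $\mathbb{T}^2\times\mathbb{R}$, $u=u_1$, $A=\mathrm{Id}$ for $t\le T_1$ and $u=u_2$, $A=\mathrm{Id}$ for $t\ge T_2$. Regularity class $R(\Lambda,C)$: $\Lambda^{-1}|\xi|^2\le\xi^TA\xi\le\Lambda|\xi|^2$ for all $\xi\in\mathbb{R}^2$ at every point, and the entries of $A$ are $C^1$ with all first partial derivatives in $x,y,t$ bounded by $C$ in absolute value. *)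

theory Defs
  imports "HOL-Analysis.Analysis"
begin

text \<open>Functions on T^2 x R are represented as functions F x y t of three real
variables that are 2pi-periodic in x and y.  Coordinate indices: 0 = x, 1 = y, 2 = t.\<close>

definition part :: "nat \<Rightarrow> (real \<Rightarrow> real \<Rightarrow> real \<Rightarrow> real) \<Rightarrow> real \<Rightarrow> real \<Rightarrow> real \<Rightarrow> real" where
  "part i F = (\<lambda>x y t. if i = 0 then deriv (\<lambda>s. F s y t) x
                       else if i = 1 then deriv (\<lambda>s. F x s t) y
                       else deriv (\<lambda>s. F x y s) t)"

definition has_partials :: "(real \<Rightarrow> real \<Rightarrow> real \<Rightarrow> real) \<Rightarrow> bool" where
  "has_partials F \<longleftrightarrow> (\<forall>x y t. (\<lambda>s. F s y t) differentiable (at x)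
                                \<and> (\<lambda>s. F x s t) differentiable (at y)
                                \<and> (\<lambda>s. F x y s) differentiable (at t))"

definition cont3 :: "(real \<Rightarrow> real \<Rightarrow> real \<Rightarrow> real) \<Rightarrow> bool" where
  "cont3 F \<longleftrightarrow> continuous_on UNIV (\<lambda>p::real \<times> real \<times> real. F (fst p) (fst (snd p)) (snd (snd p)))"

definition C1_fun :: "(real \<Rightarrow> real \<Rightarrow> real \<Rightarrow> real) \<Rightarrow> bool" where
  "C1_fun F \<longleftrightarrow> cont3 F \<and> has_partials F \<and> (\<forall>i<3. cont3 (part i F))"

definition C2_fun :: "(real \<Rightarrow> real \<Rightarrow> real \<Rightarrow> real) \<Rightarrow> bool" where
  "C2_fun F \<longleftrightarrow> C1_fun F \<and> (\<forall>i<3. C1_fun (part i F))"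

definition periodic2 :: "(real \<Rightarrow> real \<Rightarrow> real \<Rightarrow> real) \<Rightarrow> bool" where
  "periodic2 F \<longleftrightarrow> (\<forall>x y t. F (x + 2*pi) y t = F x y t \<and> F x (y + 2*pi) t = F x y t)"

text \<open>Matrix fields A :: nat => nat => (x,y,t) => real, entries A i j for i,j < 2.\<close>
definition idmat :: "nat \<Rightarrow> nat \<Rightarrow> real" where
  "idmat i j = (if i = j then 1 else 0)"

definition div_form ::
  "(nat \<Rightarrow> nat \<Rightarrow> real \<Rightarrow> real \<Rightarrow> real \<Rightarrow> real) \<Rightarrow> (real \<Rightarrow> real \<Rightarrow> real \<Rightarrow> real) \<Rightarrow> real \<Rightarrow> real \<Rightarrow> real \<Rightarrow> real" where
  "div_form A u x y t =
     (\<Sum>i<2. \<Sum>j<2. part i (\<lambda>x' y' t'. A i j x' y' t' * part j u x' y' t') x y t)"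

definition transforms ::
  "(real \<Rightarrow> real \<Rightarrow> real \<Rightarrow> real) \<Rightarrow> (real \<Rightarrow> real \<Rightarrow> real \<Rightarrow> real) \<Rightarrow> real \<Rightarrow> real \<Rightarrow>
   (real \<Rightarrow> real \<Rightarrow> real \<Rightarrow> real) \<Rightarrow> (nat \<Rightarrow> nat \<Rightarrow> real \<Rightarrow> real \<Rightarrow> real \<Rightarrow> real) \<Rightarrow> bool" where
  "transforms u1 u2 T1 T2 u A \<longleftrightarrow>
     C2_fun u \<and> periodic2 u \<and>
     (\<forall>i<2. \<forall>j<2. C1_fun (A i j) \<and> periodic2 (A i j)) \<and>
     (\<forall>x y t. part 2 (part 2 u) x y t + div_form A u x y t = 0) \<and>
     (\<forall>x y t. t \<le> T1 \<longrightarrow> u x y t = u1 x y t \<and> (\<forall>i<2. \<forall>j<2. A i j x y t = idmat i j)) \<and>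
     (\<forall>x y t. t \<ge> T2 \<longrightarrow> u x y t = u2 x y t \<and> (\<forall>i<2. \<forall>j<2. A i j x y t = idmat i j))"

definition regclass :: "real \<Rightarrow> real \<Rightarrow> (nat \<Rightarrow> nat \<Rightarrow> real \<Rightarrow> real \<Rightarrow> real \<Rightarrow> real) \<Rightarrow> bool" where
  "regclass Lam Cb A \<longleftrightarrow>
     (\<forall>x y t. \<forall>\<xi>::nat \<Rightarrow> real.
        (1 / Lam) * ((\<xi> 0)\<^sup>2 + (\<xi> 1)\<^sup>2) \<le> (\<Sum>i<2. \<Sum>j<2. \<xi> i * A i j x y t * \<xi> j) \<and>
        (\<Sum>i<2. \<Sum>j<2. \<xi> i * A i j x y t * \<xi> j) \<le> Lam * ((\<xi> 0)\<^sup>2 + (\<xi> 1)\<^sup>2)) \<and>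
     (\<forall>i<2. \<forall>j<2. C1_fun (A i j) \<and> (\<forall>l<3. \<forall>x y t. \<bar>part l (A i j) x y t\<bar> \<le> Cb))"

end

theory Submission
  imports Defs
begin

lemma piece_deriv:
  fixes g h :: "real \<Rightarrow> real"
  assumes g: "(g has_real_derivative D) (at a)" and h: "(h has_real_derivative D) (at a)"
    and eq: "g a = h a"
  shows "((\<lambda>x. if x \<le> a then g x else h x) has_real_derivative D) (at a)"
proof -
  let ?F = "\<lambda>x. if x \<le> a then g x else h x"
  have gl: "((\<lambda>e. (g (a + e) - g a) / e) \<longlongrightarrow> D) (at 0)" using g by (simp add: DERIV_def)
  have hl: "((\<lambda>e. (h (a + e) - h a) / e) \<longlongrightarrow> D) (at 0)" using h by (simp add: DERIV_def)
  have L: "((\<lambda>e. (?F (a + e) - ?F a) / e) \<longlongrightarrow> D) (at_left 0)"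
  proof (rule tendsto_cong[THEN iffD1, OF _ tendsto_mono[OF at_le[OF subset_UNIV] gl]])
    show "\<forall>\<^sub>F e in at_left 0. (g (a + e) - g a) / e = (?F (a + e) - ?F a) / e"
      by (auto simp: eventually_at_left_field intro!: exI[of _ "-1"])
  qed
  have R: "((\<lambda>e. (?F (a + e) - ?F a) / e) \<longlongrightarrow> D) (at_right 0)"
  proof (rule tendsto_cong[THEN iffD1, OF _ tendsto_mono[OF at_le[OF subset_UNIV] hl]])
    show "\<forall>\<^sub>F e in at_right 0. (h (a + e) - h a) / e = (?F (a + e) - ?F a) / e"
      using eq by (auto simp: eventually_at_right_field intro!: exI[of _ "1"])
  qed
  show ?thesis unfolding DERIV_def by (rule filterlim_split_at[OF L R])
qed

definition clp :: "(real \<Rightarrow> real) \<Rightarrow> real \<Rightarrow> real \<Rightarrow> real \<Rightarrow> real" where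
  "clp P lo hi x = (if x \<le> 0 then lo else if x \<le> 1 then P x else hi)"

lemma clp_deriv:
  assumes d: "\<And>x. (P has_real_derivative P' x) (at x)"
    and "P 0 = lo" "P 1 = hi" "P' 0 = 0" "P' 1 = 0"
  shows "(clp P lo hi has_real_derivative clp P' 0 0 x) (at x)"
proof -
  consider "x < 0" | "x = 0" | "0 < x \<and> x < 1" | "x = 1" | "x > 1" by linarith
  then show ?thesis
  proof cases
    case 1
    have "((\<lambda>_. lo) has_real_derivative 0) (at x)" by simp
    then have "(clp P lo hi has_real_derivative 0) (at x)"
      by (rule has_field_derivative_transform_within_open[of _ _ _ "{..<0}"])
         (use 1 in \<open>auto simp: clp_def\<close>)
    then show ?thesis using 1 by (simp add: clp_def)
  next
    case 2
    have h: "((\<lambda>x. if x \<le> 1 then P x else hi) has_real_derivative 0) (at 0)"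
      by (rule has_field_derivative_transform_within_open[of P _ _ "{..<1}"])
         (use d[of 0] assms in auto)
    have "((\<lambda>x. if x \<le> 0 then (\<lambda>_. lo) x else (\<lambda>x. if x \<le> 1 then P x else hi) x) has_real_derivative 0) (at 0)"
      by (rule piece_deriv) (use h assms in auto)
    then show ?thesis using 2 by (simp add: clp_def[abs_def])
  next
    case 3
    have "(P has_real_derivative P' x) (at x)" by (rule d)
    then have "(clp P lo hi has_real_derivative P' x) (at x)"
      by (rule has_field_derivative_transform_within_open[of _ _ _ "{0<..<1}"])
         (use 3 in \<open>auto simp: clp_def\<close>)
    then show ?thesis using 3 by (simp add: clp_def)
  next
    case 4
    have h: "((\<lambda>x. if x \<le> 0 then lo else P x) has_real_derivative 0) (at 1)"
      by (rule has_field_derivative_transform_within_open[of P _ _ "{0<..}"])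
         (use d[of 1] assms in auto)
    have "((\<lambda>x. if x \<le> 1 then (\<lambda>x. if x \<le> 0 then lo else P x) x else (\<lambda>_. hi) x) has_real_derivative 0) (at 1)"
      by (rule piece_deriv) (use h assms in auto)
    moreover have "(\<lambda>x. if x \<le> 1 then (\<lambda>x. if x \<le> 0 then lo else P x) x else (\<lambda>_. hi) x) = clp P lo hi"
      by (auto simp: clp_def fun_eq_iff)
    ultimately show ?thesis using 4 assms by (simp add: clp_def)
  next
    case 5
    have "((\<lambda>_. hi) has_real_derivative 0) (at x)" by simp
    then have "(clp P lo hi has_real_derivative 0) (at x)"
      by (rule has_field_derivative_transform_within_open[of _ _ _ "{1<..}"])
         (use 5 in \<open>auto simp: clp_def\<close>)
    then show ?thesis using 5 by (simp add: clp_def)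
  qed
qed

lemma clp_cont:
  assumes "continuous_on UNIV P" "P 0 = lo" "P 1 = hi"
  shows "continuous_on UNIV (clp P lo hi)"
proof -
  have "clp P lo hi = (\<lambda>x. P (max 0 (min 1 x)))"
    using assms by (auto simp: clp_def fun_eq_iff)
  moreover have "continuous_on UNIV (\<lambda>x. P (max 0 (min 1 x)))"
    by (rule continuous_on_compose2[OF assms(1)]) (auto intro!: continuous_intros)
  ultimately show ?thesis by simp
qed

definition P0 :: "real \<Rightarrow> real" where "P0 x = 35*x^4 - 84*x^5 + 70*x^6 - 20*x^7"
definition P1 :: "real \<Rightarrow> real" where "P1 x = 140*x^3 - 420*x^4 + 420*x^5 - 140*x^6"
definition P2 :: "real \<Rightarrow> real" where "P2 x = 420*x^2 - 1680*x^3 + 2100*x^4 - 840*x^5"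
definition P3 :: "real \<Rightarrow> real" where "P3 x = 840*x - 5040*x^2 + 8400*x^3 - 4200*x^4"
definition P4 :: "real \<Rightarrow> real" where "P4 x = 840 - 10080*x + 25200*x^2 - 16800*x^3"

lemma P0_d: "(P0 has_real_derivative P1 x) (at x)"
  unfolding P0_def[abs_def] P1_def by (auto intro!: derivative_eq_intros simp: algebra_simps)
lemma P1_d: "(P1 has_real_derivative P2 x) (at x)"
  unfolding P1_def[abs_def] P2_def by (auto intro!: derivative_eq_intros simp: algebra_simps)
lemma P2_d: "(P2 has_real_derivative P3 x) (at x)"
  unfolding P2_def[abs_def] P3_def by (auto intro!: derivative_eq_intros simp: algebra_simps)
lemma P3_d: "(P3 has_real_derivative P4 x) (at x)"
  unfolding P3_def[abs_def] P4_def by (auto intro!: derivative_eq_intros simp: algebra_simps)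

definition "sp = clp P0 0 1"
definition "sp1 = clp P1 0 0"
definition "sp2 = clp P2 0 0"
definition "sp3 = clp P3 0 0"

lemma sp_d: "(sp has_real_derivative sp1 x) (at x)"
  unfolding sp_def sp1_def by (rule clp_deriv[OF P0_d]) (auto simp: P0_def P1_def)
lemma sp1_d: "(sp1 has_real_derivative sp2 x) (at x)"
  unfolding sp1_def sp2_def by (rule clp_deriv[OF P1_d]) (auto simp: P1_def P2_def)
lemma sp2_d: "(sp2 has_real_derivative sp3 x) (at x)"
  unfolding sp2_def sp3_def by (rule clp_deriv[OF P2_d]) (auto simp: P2_def P3_def)
lemma sp3_c: "continuous_on UNIV sp3"
  unfolding sp3_def by (rule clp_cont) (auto simp: P3_def[abs_def] intro!: continuous_intros)

lemma sp_0: "x \<le> 0 \<Longrightarrow> sp x = 0" by (simp add: sp_def clp_def)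
lemma sp_1: "x \<ge> 1 \<Longrightarrow> sp x = 1" by (simp add: sp_def clp_def P0_def)
lemma sp1_0: "x \<le> 0 \<or> x \<ge> 1 \<Longrightarrow> sp1 x = 0" by (auto simp add: sp1_def clp_def P1_def)
lemma sp2_0: "x \<le> 0 \<or> x \<ge> 1 \<Longrightarrow> sp2 x = 0" by (auto simp add: sp2_def clp_def P2_def)
lemma sp3_0: "x \<le> 0 \<or> x \<ge> 1 \<Longrightarrow> sp3 x = 0" by (auto simp add: sp3_def clp_def P3_def)

lemma sp1_bnd: "0 \<le> sp1 x \<and> sp1 x \<le> 35/16"
proof (cases "x \<le> 0 \<or> x \<ge> 1")
  case True then show ?thesis by (simp add: sp1_0)
next
  case False
  then have x: "0 < x" "x < 1" by auto
  have e: "sp1 x = 140 * (x*(1-x))^3" using x by (simp add: sp1_def clp_def P1_def; algebra)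
  have "0 \<le> x*(1-x)" using x by (intro mult_nonneg_nonneg) auto
  have "0 \<le> (x - 1/2)^2" by simp
  then have "x*(1-x) \<le> 1/4" by (simp add: power2_eq_square algebra_simps)
  then have h: "(x*(1-x))^3 \<le> (1/4)^3" using \<open>0 \<le> x*(1-x)\<close> by (intro power_mono) auto
  have "0 \<le> (x*(1-x))^3" using \<open>0 \<le> x*(1-x)\<close> by simp
  with h show ?thesis unfolding e by (simp add: power_divide)
qed

lemma x1m: "0 \<le> x \<Longrightarrow> x \<le> 1 \<Longrightarrow> 0 \<le> x*(1-x) \<and> x*(1-x) \<le> (1/4::real)"
proof -
  assume x: "0 \<le> x" "x \<le> 1"
  have "0 \<le> x*(1-x)" using x by (intro mult_nonneg_nonneg) auto
  moreover have "0 \<le> (x - 1/2)^2" by simp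
  then have "x*(1-x) \<le> 1/4" by (simp add: power2_eq_square algebra_simps)
  ultimately show ?thesis by simp
qed

lemma sp2_bnd: "\<bar>sp2 x\<bar> \<le> 105/4"
proof (cases "x \<le> 0 \<or> x \<ge> 1")
  case True then show ?thesis by (simp add: sp2_0)
next
  case False
  then have x: "0 < x" "x < 1" by auto
  have e: "sp2 x = 420 * (x*(1-x))^2 * (1 - 2*x)" using x by (simp add: sp2_def clp_def P2_def; algebra)
  from x1m[of x] x have a: "0 \<le> x*(1-x)" "x*(1-x) \<le> 1/4" by auto
  have "(x*(1-x))^2 \<le> (1/4)^2" using a by (intro power_mono) auto
  moreover have "\<bar>1 - 2*x\<bar> \<le> 1" using x by auto
  ultimately have "(x*(1-x))^2 * \<bar>1 - 2*x\<bar> \<le> (1/4)^2 * 1"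
    by (intro mult_mono) auto
  moreover have "(1/4)^2 * 1 = (1/16::real)" by (simp add: power2_eq_square)
  ultimately have "(x*(1-x))^2 * \<bar>1 - 2*x\<bar> \<le> 1/16" by linarith
  moreover have "\<bar>sp2 x\<bar> = 420 * \<bar>(x*(1-x))^2\<bar> * \<bar>1-2*x\<bar>" unfolding e by (simp only: abs_mult abs_numeral)
  moreover have "\<bar>(x*(1-x))^2\<bar> = (x*(1-x))^2" by (rule abs_power2)
  ultimately show ?thesis by (simp only: mult.assoc)
qed

lemma sp3_bnd: "\<bar>sp3 x\<bar> \<le> 210"
proof (cases "x \<le> 0 \<or> x \<ge> 1")
  case True then show ?thesis by (simp add: sp3_0)
next
  case False
  then have x: "0 < x" "x < 1" by auto
  have e: "sp3 x = 840 * (x*(1-x)) * (1 - 5*(x*(1-x)))" using x by (simp add: sp3_def clp_def P3_def; algebra)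
  from x1m[of x] x have a: "0 \<le> x*(1-x)" "x*(1-x) \<le> 1/4" by auto
  have "\<bar>1 - 5*(x*(1-x))\<bar> \<le> 1" using a by auto
  then have "(x*(1-x)) * \<bar>1 - 5*(x*(1-x))\<bar> \<le> 1/4 * 1"
    using a by (intro mult_mono) auto
  then have "(x*(1-x)) * \<bar>1 - 5*(x*(1-x))\<bar> \<le> 1/4" by simp
  moreover have "\<bar>sp3 x\<bar> = 840 * \<bar>x*(1-x)\<bar> * \<bar>1 - 5*(x*(1-x))\<bar>" unfolding e by (simp only: abs_mult abs_numeral)
  moreover have "\<bar>x*(1-x)\<bar> = x*(1-x)" using a(1) by (rule abs_of_nonneg)
  ultimately show ?thesis by (simp only: mult.assoc)
qed

lemma sp_mono: "x \<le> y \<Longrightarrow> sp x \<le> sp y"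
  by (rule DERIV_nonneg_imp_nondecreasing[of x y sp]) (use sp_d sp1_bnd in blast)+

lemma sp_bnd: "0 \<le> sp x \<and> sp x \<le> 1"
  using sp_mono[of 0 x] sp_mono[of x 1] sp_mono[of x 0] sp_mono[of 1 x]
  by (cases "x \<le> 0"; cases "x \<le> 1") (auto simp: sp_0 sp_1)

lemma sp_c: "continuous_on UNIV sp"
  using sp_d by (meson DERIV_isCont continuous_at_imp_continuous_on)
lemma sp1_c: "continuous_on UNIV sp1"
  using sp1_d by (meson DERIV_isCont continuous_at_imp_continuous_on)
lemma sp2_c: "continuous_on UNIV sp2"
  using sp2_d by (meson DERIV_isCont continuous_at_imp_continuous_on)

lemma sp_ch[derivative_intros]: "(h has_real_derivative h') (at x within S) \<Longrightarrow> ((\<lambda>x. sp (h x)) has_real_derivative sp1 (h x) * h') (at x within S)"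
  by (rule DERIV_chain'[OF _ sp_d])
lemma sp1_ch[derivative_intros]: "(h has_real_derivative h') (at x within S) \<Longrightarrow> ((\<lambda>x. sp1 (h x)) has_real_derivative sp2 (h x) * h') (at x within S)"
  by (rule DERIV_chain'[OF _ sp1_d])
lemma sp2_ch[derivative_intros]: "(h has_real_derivative h') (at x within S) \<Longrightarrow> ((\<lambda>x. sp2 (h x)) has_real_derivative sp3 (h x) * h') (at x within S)"
  by (rule DERIV_chain'[OF _ sp2_d])

definition "psi t = sp (t - 1/10)"
definition "psi1 t = sp1 (t - 1/10)"
definition "psi2 t = sp2 (t - 1/10)"
definition "psi3 t = sp3 (t - 1/10)"
definition "Psi t = t + 8 * sp ((t - 11/10)/6)"
definition "Psi1 t = 1 + 4/3 * sp1 ((t - 11/10)/6)"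
definition "Psi2 t = 2/9 * sp2 ((t - 11/10)/6)"
definition "Psi3 t = 1/27 * sp3 ((t - 11/10)/6)"
definition "phi t = 1 - sp (2*t - 71/5)"
definition "phi1 t = -2 * sp1 (2*t - 71/5)"
definition "phi2 t = -4 * sp2 (2*t - 71/5)"
definition "phi3 t = -8 * sp3 (2*t - 71/5)"
definition "Phi t = t + 3/5 - 3/5 * sp ((t - 38/5)/2)"
definition "Phi1 t = 1 - 3/10 * sp1 ((t - 38/5)/2)"
definition "Phi2 t = -3/20 * sp2 ((t - 38/5)/2)"
definition "Phi3 t = -3/40 * sp3 ((t - 38/5)/2)"

lemma psi_d: "(psi has_real_derivative psi1 t) (at t within S)"
  unfolding psi_def[abs_def] psi1_def by (auto intro!: derivative_eq_intros)
lemma psi1_d: "(psi1 has_real_derivative psi2 t) (at t within S)"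
  unfolding psi1_def[abs_def] psi2_def by (auto intro!: derivative_eq_intros)
lemma psi2_d: "(psi2 has_real_derivative psi3 t) (at t within S)"
  unfolding psi2_def[abs_def] psi3_def by (auto intro!: derivative_eq_intros)
lemma Psi_d: "(Psi has_real_derivative Psi1 t) (at t within S)"
  unfolding Psi_def[abs_def] Psi1_def by (auto intro!: derivative_eq_intros)
lemma Psi1_d: "(Psi1 has_real_derivative Psi2 t) (at t within S)"
  unfolding Psi1_def[abs_def] Psi2_def by (auto intro!: derivative_eq_intros)
lemma Psi2_d: "(Psi2 has_real_derivative Psi3 t) (at t within S)"
  unfolding Psi2_def[abs_def] Psi3_def by (auto intro!: derivative_eq_intros)
lemma phi_d: "(phi has_real_derivative phi1 t) (at t within S)"
  unfolding phi_def[abs_def] phi1_def by (auto intro!: derivative_eq_intros)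
lemma phi1_d: "(phi1 has_real_derivative phi2 t) (at t within S)"
  unfolding phi1_def[abs_def] phi2_def by (auto intro!: derivative_eq_intros)
lemma phi2_d: "(phi2 has_real_derivative phi3 t) (at t within S)"
  unfolding phi2_def[abs_def] phi3_def by (auto intro!: derivative_eq_intros)
lemma Phi_d: "(Phi has_real_derivative Phi1 t) (at t within S)"
  unfolding Phi_def[abs_def] Phi1_def by (auto intro!: derivative_eq_intros)
lemma Phi1_d: "(Phi1 has_real_derivative Phi2 t) (at t within S)"
  unfolding Phi1_def[abs_def] Phi2_def by (auto intro!: derivative_eq_intros)
lemma Phi2_d: "(Phi2 has_real_derivative Phi3 t) (at t within S)"
  unfolding Phi2_def[abs_def] Phi3_def by (auto intro!: derivative_eq_intros)

lemma cont_comp: fixes f :: "real \<Rightarrow> real" and a b :: real shows "continuous_on UNIV f \<Longrightarrow> continuous_on UNIV (\<lambda>t. f (a * t + b))"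
proof -
  assume f: "continuous_on UNIV f"
  have "continuous_on UNIV (\<lambda>t. a * t + b)" by (intro continuous_intros)
  then show ?thesis by (rule continuous_on_compose2[OF f]) auto
qed

lemma psi3_c: "continuous_on UNIV psi3"
  unfolding psi3_def[abs_def] using cont_comp[OF sp3_c, of 1 "-1/10"] by simp
lemma Psi3_c: "continuous_on UNIV Psi3"
  unfolding Psi3_def[abs_def] using cont_comp[OF sp3_c, of "1/6" "-11/60"]
  by (auto intro!: continuous_intros simp: diff_divide_distrib)
lemma phi3_c: "continuous_on UNIV phi3"
  unfolding phi3_def[abs_def] using cont_comp[OF sp3_c, of 2 "-71/5"]
  by (auto intro!: continuous_intros)
lemma Phi3_c: "continuous_on UNIV Phi3"
  unfolding Phi3_def[abs_def] using cont_comp[OF sp3_c, of "1/2" "-19/5"]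
  by (auto intro!: continuous_intros simp: diff_divide_distrib)

definition cc :: "real \<Rightarrow> real \<Rightarrow> real" where "cc k kp = exp (- k/2 + 5*kp/6)"
definition ff :: "real \<Rightarrow> real \<Rightarrow> real" where "ff k t = phi t * exp (- k * Psi t)"
definition ff1 :: "real \<Rightarrow> real \<Rightarrow> real" where "ff1 k t = (phi1 t - k * Psi1 t * phi t) * exp (- k * Psi t)"
definition ff2 :: "real \<Rightarrow> real \<Rightarrow> real" where "ff2 k t = (phi2 t - 2*k*Psi1 t*phi1 t + (k^2 * (Psi1 t)^2 - k * Psi2 t) * phi t) * exp (- k * Psi t)"
definition gg :: "real \<Rightarrow> real \<Rightarrow> real \<Rightarrow> real" where "gg k kp t = cc k kp * psi t * exp (- kp * Phi t)"
definition gg1 :: "real \<Rightarrow> real \<Rightarrow> real \<Rightarrow> real" where "gg1 k kp t = cc k kp * (psi1 t - kp * Phi1 t * psi t) * exp (- kp * Phi t)"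
definition gg2 :: "real \<Rightarrow> real \<Rightarrow> real \<Rightarrow> real" where "gg2 k kp t = cc k kp * (psi2 t - 2*kp*Phi1 t*psi1 t + (kp^2 * (Phi1 t)^2 - kp * Phi2 t) * psi t) * exp (- kp * Phi t)"
definition p0 :: "real \<Rightarrow> real \<Rightarrow> real" where "p0 k t = (Psi1 t)^2 - Psi2 t / k"
definition p01 :: "real \<Rightarrow> real \<Rightarrow> real" where "p01 k t = 2 * Psi1 t * Psi2 t - Psi3 t / k"
definition s0 :: "real \<Rightarrow> real \<Rightarrow> real" where "s0 kp t = (Phi1 t)^2 - Phi2 t / kp"
definition s01 :: "real \<Rightarrow> real \<Rightarrow> real" where "s01 kp t = 2 * Phi1 t * Phi2 t - Phi3 t / kp"
definition Rt :: "real \<Rightarrow> real \<Rightarrow> real \<Rightarrow> real" where "Rt k kp t = cc k kp * exp (k * Psi t - kp * Phi t) * (psi2 t - 2*kp*Phi1 t*psi1 t)"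
definition Rt1 :: "real \<Rightarrow> real \<Rightarrow> real \<Rightarrow> real" where "Rt1 k kp t = cc k kp * exp (k * Psi t - kp * Phi t) *
   ((k * Psi1 t - kp * Phi1 t) * (psi2 t - 2*kp*Phi1 t*psi1 t) + psi3 t - 2*kp*Phi2 t*psi1 t - 2*kp*Phi1 t*psi2 t)"
definition St :: "real \<Rightarrow> real \<Rightarrow> real \<Rightarrow> real" where "St k kp t = exp (kp * Phi t - k * Psi t) / cc k kp * (phi2 t - 2*k*Psi1 t*phi1 t)"
definition St1 :: "real \<Rightarrow> real \<Rightarrow> real \<Rightarrow> real" where "St1 k kp t = exp (kp * Phi t - k * Psi t) / cc k kp *
   ((kp * Phi1 t - k * Psi1 t) * (phi2 t - 2*k*Psi1 t*phi1 t) + phi3 t - 2*k*Psi2 t*phi1 t - 2*k*Psi1 t*phi2 t)"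

lemma cc_pos: "cc k kp > 0" by (simp add: cc_def)
lemma cc_nz[simp]: "cc k kp \<noteq> 0" using cc_pos[of k kp] by simp

lemmas base_d = psi_d psi1_d psi2_d Psi_d Psi1_d Psi2_d phi_d phi1_d phi2_d Phi_d Phi1_d Phi2_d

lemma chain_base[derivative_intros]:
  "(h has_real_derivative h') (at x within S) \<Longrightarrow> ((\<lambda>x. psi (h x)) has_real_derivative psi1 (h x) * h') (at x within S)"
  "(h has_real_derivative h') (at x within S) \<Longrightarrow> ((\<lambda>x. psi1 (h x)) has_real_derivative psi2 (h x) * h') (at x within S)"
  "(h has_real_derivative h') (at x within S) \<Longrightarrow> ((\<lambda>x. psi2 (h x)) has_real_derivative psi3 (h x) * h') (at x within S)"
  "(h has_real_derivative h') (at x within S) \<Longrightarrow> ((\<lambda>x. Psi (h x)) has_real_derivative Psi1 (h x) * h') (at x within S)"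
  "(h has_real_derivative h') (at x within S) \<Longrightarrow> ((\<lambda>x. Psi1 (h x)) has_real_derivative Psi2 (h x) * h') (at x within S)"
  "(h has_real_derivative h') (at x within S) \<Longrightarrow> ((\<lambda>x. Psi2 (h x)) has_real_derivative Psi3 (h x) * h') (at x within S)"
  "(h has_real_derivative h') (at x within S) \<Longrightarrow> ((\<lambda>x. phi (h x)) has_real_derivative phi1 (h x) * h') (at x within S)"
  "(h has_real_derivative h') (at x within S) \<Longrightarrow> ((\<lambda>x. phi1 (h x)) has_real_derivative phi2 (h x) * h') (at x within S)"
  "(h has_real_derivative h') (at x within S) \<Longrightarrow> ((\<lambda>x. phi2 (h x)) has_real_derivative phi3 (h x) * h') (at x within S)"
  "(h has_real_derivative h') (at x within S) \<Longrightarrow> ((\<lambda>x. Phi (h x)) has_real_derivative Phi1 (h x) * h') (at x within S)"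
  "(h has_real_derivative h') (at x within S) \<Longrightarrow> ((\<lambda>x. Phi1 (h x)) has_real_derivative Phi2 (h x) * h') (at x within S)"
  "(h has_real_derivative h') (at x within S) \<Longrightarrow> ((\<lambda>x. Phi2 (h x)) has_real_derivative Phi3 (h x) * h') (at x within S)"
  by (erule DERIV_chain', rule base_d)+

lemma ff_d: "(ff k has_real_derivative ff1 k t) (at t within S)"
  unfolding ff_def[abs_def] ff1_def
  by (rule derivative_eq_intros refl | simp)+ (simp add: algebra_simps)

lemma ff1_d: "(ff1 k has_real_derivative ff2 k t) (at t within S)"
  unfolding ff1_def[abs_def] ff2_def
  by (rule derivative_eq_intros refl | simp)+ (simp add: algebra_simps power2_eq_square)
lemma gg_d: "(gg k kp has_real_derivative gg1 k kp t) (at t within S)"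
  unfolding gg_def[abs_def] gg1_def
  by (rule derivative_eq_intros refl | simp)+ (simp add: algebra_simps)
lemma gg1_d: "(gg1 k kp has_real_derivative gg2 k kp t) (at t within S)"
  unfolding gg1_def[abs_def] gg2_def
  by (rule derivative_eq_intros refl | simp)+ (simp add: algebra_simps power2_eq_square)
lemma p0_d: "(p0 k has_real_derivative p01 k t) (at t within S)"
proof -
  have e: "p0 k = (\<lambda>t. (Psi1 t)^2 - (1/k) * Psi2 t)" by (auto simp: p0_def fun_eq_iff)
  show ?thesis unfolding e
    by (auto intro!: derivative_eq_intros simp: p01_def divide_inverse power2_eq_square algebra_simps)
qed
lemma s0_d: "(s0 kp has_real_derivative s01 kp t) (at t within S)"
proof -
  have e: "s0 kp = (\<lambda>t. (Phi1 t)^2 - (1/kp) * Phi2 t)" by (auto simp: s0_def fun_eq_iff)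
  show ?thesis unfolding e
    by (auto intro!: derivative_eq_intros simp: s01_def divide_inverse power2_eq_square algebra_simps)
qed
lemma Rt_d: "(Rt k kp has_real_derivative Rt1 k kp t) (at t within S)"
  unfolding Rt_def[abs_def] Rt1_def
  by (rule derivative_eq_intros refl | simp)+ (simp add: algebra_simps)
lemma St_d: "(St k kp has_real_derivative St1 k kp t) (at t within S)"
proof -
  have e: "St k kp = (\<lambda>t. (1 / cc k kp) * (exp (kp * Phi t - k * Psi t) * (phi2 t - 2*k*Psi1 t*phi1 t)))"
    by (auto simp: St_def fun_eq_iff)
  show ?thesis unfolding e
    by (rule derivative_eq_intros refl | simp)+ (simp add: St1_def field_simps)
qed

lemma dcont: "(\<And>t. (f has_real_derivative f' t) (at t)) \<Longrightarrow> continuous_on S f"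
  by (meson DERIV_isCont continuous_at_imp_continuous_on)

lemma base_c[continuous_intros]:
  "continuous_on S psi" "continuous_on S psi1" "continuous_on S psi2" "continuous_on S psi3"
  "continuous_on S Psi" "continuous_on S Psi1" "continuous_on S Psi2" "continuous_on S Psi3"
  "continuous_on S phi" "continuous_on S phi1" "continuous_on S phi2" "continuous_on S phi3"
  "continuous_on S Phi" "continuous_on S Phi1" "continuous_on S Phi2" "continuous_on S Phi3"
  by (rule dcont, rule base_d | rule continuous_on_subset[OF psi3_c] continuous_on_subset[OF Psi3_c]
      continuous_on_subset[OF phi3_c] continuous_on_subset[OF Phi3_c], simp)+

lemma comp_c[continuous_intros]:
  "continuous_on S h \<Longrightarrow> continuous_on S (\<lambda>x. psi (h x))"
  "continuous_on S h \<Longrightarrow> continuous_on S (\<lambda>x. psi1 (h x))"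
  "continuous_on S h \<Longrightarrow> continuous_on S (\<lambda>x. psi2 (h x))"
  "continuous_on S h \<Longrightarrow> continuous_on S (\<lambda>x. psi3 (h x))"
  "continuous_on S h \<Longrightarrow> continuous_on S (\<lambda>x. Psi (h x))"
  "continuous_on S h \<Longrightarrow> continuous_on S (\<lambda>x. Psi1 (h x))"
  "continuous_on S h \<Longrightarrow> continuous_on S (\<lambda>x. Psi2 (h x))"
  "continuous_on S h \<Longrightarrow> continuous_on S (\<lambda>x. Psi3 (h x))"
  "continuous_on S h \<Longrightarrow> continuous_on S (\<lambda>x. phi (h x))"
  "continuous_on S h \<Longrightarrow> continuous_on S (\<lambda>x. phi1 (h x))"
  "continuous_on S h \<Longrightarrow> continuous_on S (\<lambda>x. phi2 (h x))"
  "continuous_on S h \<Longrightarrow> continuous_on S (\<lambda>x. phi3 (h x))"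
  "continuous_on S h \<Longrightarrow> continuous_on S (\<lambda>x. Phi (h x))"
  "continuous_on S h \<Longrightarrow> continuous_on S (\<lambda>x. Phi1 (h x))"
  "continuous_on S h \<Longrightarrow> continuous_on S (\<lambda>x. Phi2 (h x))"
  "continuous_on S h \<Longrightarrow> continuous_on S (\<lambda>x. Phi3 (h x))"
  by (rule continuous_on_compose2[where t=UNIV], rule base_c, assumption, simp)+

lemma psi_lo: "t \<le> 1/10 \<Longrightarrow> psi t = 0 \<and> psi1 t = 0 \<and> psi2 t = 0 \<and> psi3 t = 0"
  by (simp add: psi_def psi1_def psi2_def psi3_def sp_0 sp1_0 sp2_0 sp3_0)
lemma psi_hi: "t \<ge> 11/10 \<Longrightarrow> psi t = 1 \<and> psi1 t = 0 \<and> psi2 t = 0 \<and> psi3 t = 0"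
  by (simp add: psi_def psi1_def psi2_def psi3_def sp_1 sp1_0 sp2_0 sp3_0)
lemma Psi_lo: "t \<le> 11/10 \<Longrightarrow> Psi t = t \<and> Psi1 t = 1 \<and> Psi2 t = 0 \<and> Psi3 t = 0"
  by (simp add: Psi_def Psi1_def Psi2_def Psi3_def sp_0 sp1_0 sp2_0 sp3_0)
lemma Psi_hi: "t \<ge> 71/10 \<Longrightarrow> Psi t = t + 8 \<and> Psi1 t = 1 \<and> Psi2 t = 0 \<and> Psi3 t = 0"
  by (simp add: Psi_def Psi1_def Psi2_def Psi3_def sp_1 sp1_0 sp2_0 sp3_0)
lemma phi_lo: "t \<le> 71/10 \<Longrightarrow> phi t = 1 \<and> phi1 t = 0 \<and> phi2 t = 0 \<and> phi3 t = 0"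
  by (simp add: phi_def phi1_def phi2_def phi3_def sp_0 sp1_0 sp2_0 sp3_0)
lemma phi_hi: "t \<ge> 38/5 \<Longrightarrow> phi t = 0 \<and> phi1 t = 0 \<and> phi2 t = 0 \<and> phi3 t = 0"
  by (simp add: phi_def phi1_def phi2_def phi3_def sp_1 sp1_0 sp2_0 sp3_0)
lemma Phi_lo: "t \<le> 38/5 \<Longrightarrow> Phi t = t + 3/5 \<and> Phi1 t = 1 \<and> Phi2 t = 0 \<and> Phi3 t = 0"
  by (simp add: Phi_def Phi1_def Phi2_def Phi3_def sp_0 sp1_0 sp2_0 sp3_0)
lemma Phi_hi: "t \<ge> 48/5 \<Longrightarrow> Phi t = t \<and> Phi1 t = 1 \<and> Phi2 t = 0 \<and> Phi3 t = 0"
  by (simp add: Phi_def Phi1_def Phi2_def Phi3_def sp_1 sp1_0 sp2_0 sp3_0)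

lemma exp_comb1: "exp (a - b) * exp (- a) = exp (- (b::real))"
  by (simp add: exp_add[symmetric])

lemma ode1:
  assumes "k \<noteq> 0"
  shows "ff2 k t - p0 k t * k^2 * ff k t - St k kp t * gg k kp t = 0"
proof (cases "t \<le> 71/10")
  case True
  with phi_lo[OF True] assms show ?thesis
    by (simp add: ff2_def p0_def ff_def St_def power2_eq_square field_simps)
next
  case False
  then have "psi t = 1" using psi_hi[of t] by simp
  moreover have "exp (kp * Phi t - k * Psi t) * exp (- kp * Phi t) = exp (- k * Psi t)"
    using exp_comb1[of "kp * Phi t" "k * Psi t"] by simp
  ultimately show ?thesis using assms
    by (simp add: ff2_def p0_def ff_def St_def gg_def power2_eq_square field_simps)
qed

lemma ode2:
  assumes "kp \<noteq> 0"
  shows "gg2 k kp t - s0 kp t * kp^2 * gg k kp t - Rt k kp t * ff k t = 0"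
proof (cases "t \<ge> 11/10")
  case True
  with psi_hi[OF True] assms show ?thesis
    by (simp add: gg2_def s0_def gg_def Rt_def power2_eq_square field_simps)
next
  case False
  then have "phi t = 1" using phi_lo[of t] by simp
  moreover have "exp (k * Psi t - kp * Phi t) * exp (- k * Psi t) = exp (- kp * Phi t)"
    using exp_comb1[of "k * Psi t" "kp * Phi t"] by simp
  ultimately show ?thesis using assms
    by (simp add: gg2_def s0_def gg_def Rt_def ff_def power2_eq_square field_simps)
qed

lemma absmm: "\<bar>a\<bar> \<le> A \<Longrightarrow> \<bar>b\<bar> \<le> B \<Longrightarrow> \<bar>a * b\<bar> \<le> A * (B::real)"
  by (simp add: abs_mult mult_mono')

lemma psi_b: "0 \<le> psi t \<and> psi t \<le> 1" "0 \<le> psi1 t \<and> psi1 t \<le> 35/16" "\<bar>psi2 t\<bar> \<le> 105/4" "\<bar>psi3 t\<bar> \<le> 210"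
  using sp_bnd[of "t - 1/10"] sp1_bnd[of "t - 1/10"] sp2_bnd[of "t - 1/10"] sp3_bnd[of "t - 1/10"]
  by (auto simp: psi_def psi1_def psi2_def psi3_def)
lemma phi_b: "0 \<le> phi t \<and> phi t \<le> 1" "\<bar>phi1 t\<bar> \<le> 35/8" "\<bar>phi2 t\<bar> \<le> 105" "\<bar>phi3 t\<bar> \<le> 1680"
proof -
  show "0 \<le> phi t \<and> phi t \<le> 1" using sp_bnd[of "2*t - 71/5"] by (simp add: phi_def)
  show "\<bar>phi1 t\<bar> \<le> 35/8" using sp1_bnd[of "2*t - 71/5"] by (simp add: phi1_def)
  show "\<bar>phi2 t\<bar> \<le> 105" using sp2_bnd[of "2*t - 71/5"] by (simp add: phi2_def abs_mult)
  show "\<bar>phi3 t\<bar> \<le> 1680" using sp3_bnd[of "2*t - 71/5"] by (simp add: phi3_def abs_mult)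
qed
lemma Psi_b: "Psi t \<ge> t" "1 \<le> Psi1 t \<and> Psi1 t \<le> 47/12" "\<bar>Psi2 t\<bar> \<le> 35/6" "\<bar>Psi3 t\<bar> \<le> 70/9"
proof -
  show "Psi t \<ge> t" using sp_bnd[of "(t - 11/10)/6"] by (simp add: Psi_def)
  show "1 \<le> Psi1 t \<and> Psi1 t \<le> 47/12" using sp1_bnd[of "(t - 11/10)/6"] by (simp add: Psi1_def)
  show "\<bar>Psi2 t\<bar> \<le> 35/6" using sp2_bnd[of "(t - 11/10)/6"] by (simp add: Psi2_def abs_mult)
  show "\<bar>Psi3 t\<bar> \<le> 70/9" using sp3_bnd[of "(t - 11/10)/6"] by (simp add: Psi3_def abs_mult)
qed
lemma Phi_b: "Phi t \<ge> t" "11/32 \<le> Phi1 t \<and> Phi1 t \<le> 1" "\<bar>Phi2 t\<bar> \<le> 63/16" "\<bar>Phi3 t\<bar> \<le> 63/4"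
proof -
  show "Phi t \<ge> t" using sp_bnd[of "(t - 38/5)/2"] by (simp add: Phi_def)
  show "11/32 \<le> Phi1 t \<and> Phi1 t \<le> 1" using sp1_bnd[of "(t - 38/5)/2"] by (simp add: Phi1_def)
  show "\<bar>Phi2 t\<bar> \<le> 63/16" using sp2_bnd[of "(t - 38/5)/2"] by (simp add: Phi2_def abs_mult)
  show "\<bar>Phi3 t\<bar> \<le> 63/4" using sp3_bnd[of "(t - 38/5)/2"] by (simp add: Phi3_def abs_mult)
qed

lemma expbig:
  fixes k :: real
  assumes "k \<ge> 10^10"
  shows "exp (- k/30) * (10*k^2 + 400*k + 2000) \<le> 1"
proof -
  have k0: "k > 0" using assms by simp
  have "exp (k/30) = exp (k/90) ^ 3" using exp_of_nat_mult[of 3 "k/90"] by simp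
  moreover have "(k/90)^3 \<le> exp (k/90) ^ 3"
    using exp_ge_add_one_self[of "k/90"] k0 by (intro power_mono) linarith+
  ultimately have e: "k^3 / 729000 \<le> exp (k/30)" by (simp add: power_divide)
  have "10*k^2 + 400*k + 2000 \<le> 2410 * k^2"
  proof -
    have k1: "k \<ge> 1" using assms by simp
    have "1 * k \<le> k * k" using assms by (intro mult_right_mono) auto
    then show ?thesis using k1 unfolding power2_eq_square by linarith
  qed
  also have "2410 * k^2 \<le> k^3 / 729000"
  proof -
    have "2410 * 729000 * k^2 \<le> k * k^2" using assms by (intro mult_right_mono) auto
    then show ?thesis by (simp add: power3_eq_cube power2_eq_square field_simps)
  qed
  also have "\<dots> \<le> exp (k/30)" by (rule e)
  finally have "10*k^2 + 400*k + 2000 \<le> exp (k/30)" .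
  then show ?thesis by (simp add: exp_minus field_simps)
qed

lemma fin:
  fixes k a X :: real
  assumes "0 \<le> a" "a \<le> exp (-k/30)" "\<bar>X\<bar> \<le> 10*k^2 + 400*k + 2000" "k \<ge> 10^10"
  shows "\<bar>a * X\<bar> \<le> 1"
proof -
  have "\<bar>a * X\<bar> = a * \<bar>X\<bar>" using assms by (simp add: abs_mult)
  also have "\<dots> \<le> exp (-k/30) * (10*k^2 + 400*k + 2000)"
    using assms by (intro mult_mono) auto
  also have "\<dots> \<le> 1" using expbig assms by simp
  finally show ?thesis .
qed

lemma Rt_b:
  assumes k: "k \<ge> 10^10" "k < kp" "kp \<le> 2*k"
  shows "\<bar>Rt k kp t\<bar> \<le> 1 \<and> \<bar>Rt1 k kp t\<bar> \<le> 1"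
proof (cases "t \<le> 1/10 \<or> t \<ge> 11/10")
  case True
  then have "psi1 t = 0 \<and> psi2 t = 0 \<and> psi3 t = 0" using psi_lo psi_hi by blast
  then show ?thesis by (simp add: Rt_def Rt1_def)
next
  case False
  then have t: "1/10 < t" "t < 11/10" by auto
  from Psi_lo[of t] Phi_lo[of t] t have v: "Psi t = t" "Psi1 t = 1" "Psi2 t = 0" "Phi t = t + 3/5" "Phi1 t = 1" "Phi2 t = 0"
    by auto
  define a where "a = cc k kp * exp (k * Psi t - kp * Phi t)"
  have a0: "0 \<le> a" by (simp add: a_def cc_def)
  have "a = exp (- k/2 + 5*kp/6 + (k * t - kp * (t + 3/5)))" by (simp add: a_def cc_def v exp_add)
  moreover have "- k/2 + 5*kp/6 + (k * t - kp * (t + 3/5)) \<le> -k/30"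
  proof -
    have "0 \<le> (kp - k) * t" using k t by (intro mult_nonneg_nonneg) auto
    then show ?thesis using k by (simp add: algebra_simps)
  qed
  ultimately have a1: "a \<le> exp (-k/30)" by simp
  have k1: "k \<ge> 1" using k by simp
  have p1: "0 \<le> psi1 t" "psi1 t \<le> 35/16" "\<bar>psi2 t\<bar> \<le> 105/4" "\<bar>psi3 t\<bar> \<le> 210" using psi_b by auto
  have kk: "k \<le> k * k" using k1 by (metis mult_le_cancel_left1 order_trans zero_le_one not_le)
  have Y: "\<bar>psi2 t - 2*kp*1*psi1 t\<bar> \<le> 105/4 + 35/4 * k"
  proof -
    have "kp * psi1 t \<le> (2*k) * (35/16)" using p1 k by (intro mult_mono) auto
    moreover have "0 \<le> kp * psi1 t" using p1 k by simp
    ultimately show ?thesis using p1 by (auto simp: abs_le_iff)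
  qed
  have "\<bar>psi2 t - 2*kp*1*psi1 t\<bar> \<le> 10*k^2 + 400*k + 2000"
    using Y k1 kk unfolding power2_eq_square by linarith
  then have R: "\<bar>Rt k kp t\<bar> \<le> 1"
    unfolding Rt_def a_def[symmetric] using fin[OF a0 a1 _ k(1)] v by simp
  have "\<bar>(k - kp) * (psi2 t - 2*kp*1*psi1 t)\<bar> \<le> k * (105/4 + 35/4 * k)"
    by (rule absmm) (use k Y in auto)
  moreover have "\<bar>2*kp*1*psi2 t\<bar> \<le> (4*k) * (105/4)"
    by (simp only: abs_mult mult_1_right) (rule mult_mono, use k p1 in auto)
  ultimately have "\<bar>(k * 1 - kp * 1) * (psi2 t - 2*kp*1*psi1 t) + psi3 t - 2*kp*0*psi1 t - 2*kp*1*psi2 t\<bar>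
      \<le> 10*k^2 + 400*k + 2000"
    using p1 k1 kk by (simp add: power2_eq_square algebra_simps abs_le_iff; linarith)
  then have R1: "\<bar>Rt1 k kp t\<bar> \<le> 1"
    unfolding Rt1_def a_def[symmetric] using fin[OF a0 a1 _ k(1)] v by simp
  from R R1 show ?thesis by simp
qed

lemma St_b:
  assumes k: "k \<ge> 10^10" "k < kp" "kp \<le> 2*k"
  shows "\<bar>St k kp t\<bar> \<le> 1 \<and> \<bar>St1 k kp t\<bar> \<le> 1"
proof (cases "t \<le> 71/10 \<or> t \<ge> 38/5")
  case True
  then have "phi1 t = 0 \<and> phi2 t = 0 \<and> phi3 t = 0" using phi_lo phi_hi by blast
  then show ?thesis by (simp add: St_def St1_def)
next
  case False
  then have t: "71/10 < t" "t < 38/5" by auto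
  from Psi_hi[of t] Phi_lo[of t] t have v: "Psi t = t + 8" "Psi1 t = 1" "Psi2 t = 0" "Phi t = t + 3/5" "Phi1 t = 1" "Phi2 t = 0"
    by auto
  define a where "a = exp (kp * Phi t - k * Psi t) / cc k kp"
  have a0: "0 \<le> a" by (simp add: a_def cc_def)
  have "a = exp ((kp * (t + 3/5) - k * (t + 8)) - (- k/2 + 5*kp/6))" by (simp add: a_def cc_def v exp_diff)
  moreover have "(kp * (t + 3/5) - k * (t + 8)) - (- k/2 + 5*kp/6) \<le> -k/30"
  proof -
    have "(kp - k) * t \<le> (kp - k) * (38/5)" using k t by (intro mult_left_mono) auto
    then show ?thesis using k by (simp add: algebra_simps)
  qed
  ultimately have a1: "a \<le> exp (-k/30)" by simp
  have k1: "k \<ge> 1" using k by simp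
  have p1: "\<bar>phi1 t\<bar> \<le> 35/8" "\<bar>phi2 t\<bar> \<le> 105" "\<bar>phi3 t\<bar> \<le> 1680" using phi_b by auto
  have kk: "k \<le> k * k" using k1 by (metis mult_le_cancel_left1 order_trans zero_le_one not_le)
  have Y: "\<bar>phi2 t - 2*k*1*phi1 t\<bar> \<le> 105 + 35/4 * k"
  proof -
    have "\<bar>2*k*1*phi1 t\<bar> \<le> (2*k) * (35/8)"
      by (simp only: abs_mult mult_1_right) (rule mult_mono, use k p1 in auto)
    then show ?thesis using p1 by (auto simp: abs_le_iff)
  qed
  have "\<bar>phi2 t - 2*k*1*phi1 t\<bar> \<le> 10*k^2 + 400*k + 2000"
    using Y k1 kk unfolding power2_eq_square by linarith
  then have R: "\<bar>St k kp t\<bar> \<le> 1"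
    unfolding St_def using fin[OF a0 a1 _ k(1)] v by (simp add: a_def)
  have "\<bar>(kp - k) * (phi2 t - 2*k*1*phi1 t)\<bar> \<le> k * (105 + 35/4 * k)"
    by (rule absmm) (use k Y in auto)
  moreover have "\<bar>2*k*1*phi2 t\<bar> \<le> (2*k) * 105"
    by (simp only: abs_mult mult_1_right) (rule mult_mono, use k p1 in auto)
  ultimately have "\<bar>(kp * 1 - k * 1) * (phi2 t - 2*k*1*phi1 t) + phi3 t - 2*k*0*phi1 t - 2*k*1*phi2 t\<bar>
      \<le> 10*k^2 + 400*k + 2000"
    using p1 k1 kk by (simp add: power2_eq_square algebra_simps abs_le_iff; linarith)
  then have R1: "\<bar>St1 k kp t\<bar> \<le> 1"
    unfolding St1_def using fin[OF a0 a1 _ k(1)] v by (simp add: a_def)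
  from R R1 show ?thesis by simp
qed

definition sep2 :: "(real \<Rightarrow> real) \<Rightarrow> (real \<Rightarrow> real) \<Rightarrow> (real \<Rightarrow> real) \<Rightarrow> (real \<Rightarrow> real) \<Rightarrow> (real \<Rightarrow> real) \<Rightarrow> (real \<Rightarrow> real) \<Rightarrow> real \<Rightarrow> real \<Rightarrow> real \<Rightarrow> real" where
  "sep2 a1 U1 V1 a2 U2 V2 = (\<lambda>x y t. a1 t * U1 x * V1 y + a2 t * U2 x * V2 y)"

definition "D1 f f' \<longleftrightarrow> (\<forall>t. (f has_real_derivative f' t) (at t)) \<and> continuous_on UNIV f'"

lemma D1_cont: "D1 f f' \<Longrightarrow> continuous_on UNIV f"
  unfolding D1_def by (meson DERIV_isCont continuous_at_imp_continuous_on)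

lemma cc_comp: "continuous_on UNIV f \<Longrightarrow> continuous_on S h \<Longrightarrow> continuous_on S (\<lambda>x. f (h x))"
  by (rule continuous_on_compose2[where t=UNIV]) auto
lemma c_fst: "continuous_on UNIV f \<Longrightarrow> continuous_on UNIV (\<lambda>p::real\<times>real\<times>real. f (fst p))"
  by (rule cc_comp) (auto intro!: continuous_intros)
lemma c_snd1: "continuous_on UNIV f \<Longrightarrow> continuous_on UNIV (\<lambda>p::real\<times>real\<times>real. f (fst (snd p)))"
  by (rule cc_comp) (auto intro!: continuous_intros)
lemma c_snd2: "continuous_on UNIV f \<Longrightarrow> continuous_on UNIV (\<lambda>p::real\<times>real\<times>real. f (snd (snd p)))"
  by (rule cc_comp) (auto intro!: continuous_intros)
lemma cont3_sep2:
  assumes "continuous_on UNIV a1" "continuous_on UNIV U1" "continuous_on UNIV V1"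
    "continuous_on UNIV a2" "continuous_on UNIV U2" "continuous_on UNIV V2"
  shows "cont3 (sep2 a1 U1 V1 a2 U2 V2)"
  unfolding sep2_def cont3_def
  by (intro continuous_on_add continuous_on_mult c_fst c_snd1 c_snd2 assms)

lemma sep2_dx:
  assumes "D1 U1 U1'" "D1 U2 U2'"
  shows "((\<lambda>s. sep2 a1 U1 V1 a2 U2 V2 s y t) has_real_derivative sep2 a1 U1' V1 a2 U2' V2 x y t) (at x)"
proof -
  have d: "(U1 has_real_derivative U1' x) (at x)" "(U2 has_real_derivative U2' x) (at x)" using assms by (auto simp: D1_def)
  show ?thesis unfolding sep2_def
    by (rule DERIV_add; rule DERIV_cmult_right; rule DERIV_cmult; rule d)
qed
lemma sep2_dy:
  assumes "D1 V1 V1'" "D1 V2 V2'"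
  shows "((\<lambda>s. sep2 a1 U1 V1 a2 U2 V2 x s t) has_real_derivative sep2 a1 U1 V1' a2 U2 V2' x y t) (at y)"
proof -
  have d: "(V1 has_real_derivative V1' y) (at y)" "(V2 has_real_derivative V2' y) (at y)" using assms by (auto simp: D1_def)
  show ?thesis unfolding sep2_def
    by (rule DERIV_add; rule DERIV_cmult; rule d)
qed
lemma sep2_dt:
  assumes "D1 a1 a1'" "D1 a2 a2'"
  shows "((\<lambda>s. sep2 a1 U1 V1 a2 U2 V2 x y s) has_real_derivative sep2 a1' U1 V1 a2' U2 V2 x y t) (at t)"
proof -
  have d: "(a1 has_real_derivative a1' t) (at t)" "(a2 has_real_derivative a2' t) (at t)" using assms by (auto simp: D1_def)
  show ?thesis unfolding sep2_def
    by (rule DERIV_add; rule DERIV_cmult_right; rule DERIV_cmult_right; rule d)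
qed

lemma part_eqs:
  assumes "D1 a1 a1'" "D1 a2 a2'" "D1 U1 U1'" "D1 U2 U2'" "D1 V1 V1'" "D1 V2 V2'"
  shows "part 0 (sep2 a1 U1 V1 a2 U2 V2) = sep2 a1 U1' V1 a2 U2' V2"
    "part 1 (sep2 a1 U1 V1 a2 U2 V2) = sep2 a1 U1 V1' a2 U2 V2'"
    "part 2 (sep2 a1 U1 V1 a2 U2 V2) = sep2 a1' U1 V1 a2' U2 V2"
  unfolding part_def
  by (simp_all add: fun_eq_iff DERIV_imp_deriv[OF sep2_dx[OF assms(3,4)]]
     DERIV_imp_deriv[OF sep2_dy[OF assms(5,6)]] DERIV_imp_deriv[OF sep2_dt[OF assms(1,2)]])

lemma sep2_C1:
  assumes "D1 a1 a1'" "D1 a2 a2'" "D1 U1 U1'" "D1 U2 U2'" "D1 V1 V1'" "D1 V2 V2'"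
  shows "C1_fun (sep2 a1 U1 V1 a2 U2 V2)"
proof -
  have c: "continuous_on UNIV a1" "continuous_on UNIV a2" "continuous_on UNIV U1" "continuous_on UNIV U2"
    "continuous_on UNIV V1" "continuous_on UNIV V2"
    using assms by (auto intro: D1_cont)
  have c': "continuous_on UNIV a1'" "continuous_on UNIV a2'" "continuous_on UNIV U1'" "continuous_on UNIV U2'"
    "continuous_on UNIV V1'" "continuous_on UNIV V2'"
    using assms by (auto simp: D1_def)
  have hp: "has_partials (sep2 a1 U1 V1 a2 U2 V2)"
    unfolding has_partials_def
    using sep2_dx[OF assms(3,4)] sep2_dy[OF assms(5,6)] sep2_dt[OF assms(1,2)]
    by (meson real_differentiable_def)
  have "\<forall>i<3. cont3 (part i (sep2 a1 U1 V1 a2 U2 V2))"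
  proof (intro allI impI)
    fix i :: nat assume "i < 3"
    then have "i = 0 \<or> i = 1 \<or> i = 2" by auto
    then show "cont3 (part i (sep2 a1 U1 V1 a2 U2 V2))"
      using part_eqs[OF assms] c c' by (auto intro!: cont3_sep2)
  qed
  then show ?thesis unfolding C1_fun_def using hp cont3_sep2[OF c(1,3,5,2,4,6)] by auto
qed

lemma part_mult:
  assumes "\<And>x y t. ((\<lambda>s. F s y t) has_real_derivative F0 x y t) (at x)"
    "\<And>x y t. ((\<lambda>s. G s y t) has_real_derivative G0 x y t) (at x)"
    "\<And>x y t. ((\<lambda>s. F x s t) has_real_derivative F1 x y t) (at y)"
    "\<And>x y t. ((\<lambda>s. G x s t) has_real_derivative G1 x y t) (at y)"
  shows "part 0 (\<lambda>x y t. F x y t * G x y t) x y t = F0 x y t * G x y t + F x y t * G0 x y t"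
    "part 1 (\<lambda>x y t. F x y t * G x y t) x y t = F1 x y t * G x y t + F x y t * G1 x y t"
  unfolding part_def
  by (simp_all add: DERIV_imp_deriv[OF DERIV_mult[OF assms(1,2)]] DERIV_imp_deriv[OF DERIV_mult[OF assms(3,4)]])

lemma D1_const: "D1 (\<lambda>_. c) (\<lambda>_. 0)" by (simp add: D1_def)
lemma D1_cos: "D1 (\<lambda>x. cos (k * x)) (\<lambda>x. - k * sin (k * x))"
  unfolding D1_def by (auto intro!: derivative_eq_intros continuous_intros)
lemma D1_sin: "D1 (\<lambda>x. sin (k * x)) (\<lambda>x. k * cos (k * x))"
  unfolding D1_def by (auto intro!: derivative_eq_intros continuous_intros)
lemma D1_msin: "D1 (\<lambda>x. - k * sin (k * x)) (\<lambda>x. - k * (k * cos (k * x)))"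
  unfolding D1_def by (auto intro!: derivative_eq_intros continuous_intros)
lemma D1_kcos: "D1 (\<lambda>x. k * cos (k * x)) (\<lambda>x. - k * (k * sin (k * x)))"
  unfolding D1_def by (auto intro!: derivative_eq_intros continuous_intros)
lemma D1_mkcos: "D1 (\<lambda>x. - k * (k * cos (k * x))) (\<lambda>x. k * (k * (k * sin (k * x))))"
  unfolding D1_def by (auto intro!: derivative_eq_intros continuous_intros)

definition uu :: "real \<Rightarrow> real \<Rightarrow> real \<Rightarrow> real \<Rightarrow> real \<Rightarrow> real" where "uu k kp = sep2 (ff k) (\<lambda>x. cos (k*x)) (\<lambda>_. 1) (gg k kp) (\<lambda>_. 1) (\<lambda>y. cos (kp*y))"

definition AA :: "real \<Rightarrow> real \<Rightarrow> nat \<Rightarrow> nat \<Rightarrow> real \<Rightarrow> real \<Rightarrow> real \<Rightarrow> real" where "AA k kp i j = (if i = 0 then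
     (if j = 0 then sep2 (p0 k) (\<lambda>_. 1) (\<lambda>_. 1) (\<lambda>t. Rt k kp t / k^2) (\<lambda>x. cos (k*x)) (\<lambda>y. cos (kp*y))
      else sep2 (\<lambda>_. 0) (\<lambda>_. 1) (\<lambda>_. 1) (\<lambda>t. 2 * St k kp t / (k*kp)) (\<lambda>x. sin (k*x)) (\<lambda>y. sin (kp*y)))
   else
     (if j = 0 then sep2 (\<lambda>_. 0) (\<lambda>_. 1) (\<lambda>_. 1) (\<lambda>t. 2 * Rt k kp t / (k*kp)) (\<lambda>x. sin (k*x)) (\<lambda>y. sin (kp*y))
      else sep2 (s0 kp) (\<lambda>_. 1) (\<lambda>_. 1) (\<lambda>t. St k kp t / kp^2) (\<lambda>x. cos (k*x)) (\<lambda>y. cos (kp*y))))"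

lemma cD: "continuous_on UNIV (ff2 k)" "continuous_on UNIV (gg2 k kp)" "continuous_on UNIV (p01 k)"
  "continuous_on UNIV (s01 kp)" "continuous_on UNIV (Rt1 k kp)" "continuous_on UNIV (St1 k kp)"
  unfolding ff2_def[abs_def] gg2_def[abs_def] p01_def[abs_def] s01_def[abs_def] Rt1_def[abs_def] St1_def[abs_def]
  by (auto simp: divide_inverse intro!: continuous_intros)

lemma cdiv: "continuous_on UNIV f \<Longrightarrow> continuous_on UNIV (\<lambda>t. f t / (a::real))"
  "continuous_on UNIV f \<Longrightarrow> continuous_on UNIV (\<lambda>t. 2 * f t / (a::real))"
  by (simp_all add: divide_inverse continuous_on_mult_right continuous_on_mult_left)

lemma DD: "D1 (ff k) (ff1 k)" "D1 (ff1 k) (ff2 k)" "D1 (gg k kp) (gg1 k kp)" "D1 (gg1 k kp) (gg2 k kp)"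
  "D1 (p0 k) (p01 k)" "D1 (s0 kp) (s01 kp)"
  "D1 (\<lambda>t. Rt k kp t / a) (\<lambda>t. Rt1 k kp t / a)" "D1 (\<lambda>t. St k kp t / a) (\<lambda>t. St1 k kp t / a)"
  "D1 (\<lambda>t. 2 * Rt k kp t / a) (\<lambda>t. 2 * Rt1 k kp t / a)" "D1 (\<lambda>t. 2 * St k kp t / a) (\<lambda>t. 2 * St1 k kp t / a)"
proof -
  have c1: "continuous_on UNIV (ff1 k)" "continuous_on UNIV (gg1 k kp)"
    using ff1_d gg1_d by (meson DERIV_isCont continuous_at_imp_continuous_on)+
  show "D1 (ff k) (ff1 k)" "D1 (ff1 k) (ff2 k)" "D1 (gg k kp) (gg1 k kp)" "D1 (gg1 k kp) (gg2 k kp)"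
    "D1 (p0 k) (p01 k)" "D1 (s0 kp) (s01 kp)"
    unfolding D1_def using c1 cD ff_d ff1_d gg_d gg1_d p0_d s0_d by auto
  show "D1 (\<lambda>t. Rt k kp t / a) (\<lambda>t. Rt1 k kp t / a)" "D1 (\<lambda>t. St k kp t / a) (\<lambda>t. St1 k kp t / a)"
    "D1 (\<lambda>t. 2 * Rt k kp t / a) (\<lambda>t. 2 * Rt1 k kp t / a)" "D1 (\<lambda>t. 2 * St k kp t / a) (\<lambda>t. 2 * St1 k kp t / a)"
    unfolding D1_def using cD(5,6)
    by (auto simp: divide_inverse intro!: derivative_eq_intros Rt_d St_d cdiv[unfolded divide_inverse])
qed

lemmas D1s = D1_cos D1_sin D1_const D1_msin D1_kcos D1_mkcos DD

lemma AA_eqs: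
  "AA k kp 0 0 = sep2 (p0 k) (\<lambda>_. 1) (\<lambda>_. 1) (\<lambda>t. Rt k kp t / k^2) (\<lambda>x. cos (k*x)) (\<lambda>y. cos (kp*y))"
  "AA k kp 0 1 = sep2 (\<lambda>_. 0) (\<lambda>_. 1) (\<lambda>_. 1) (\<lambda>t. 2 * St k kp t / (k*kp)) (\<lambda>x. sin (k*x)) (\<lambda>y. sin (kp*y))"
  "AA k kp 1 0 = sep2 (\<lambda>_. 0) (\<lambda>_. 1) (\<lambda>_. 1) (\<lambda>t. 2 * Rt k kp t / (k*kp)) (\<lambda>x. sin (k*x)) (\<lambda>y. sin (kp*y))"
  "AA k kp 1 1 = sep2 (s0 kp) (\<lambda>_. 1) (\<lambda>_. 1) (\<lambda>t. St k kp t / kp^2) (\<lambda>x. cos (k*x)) (\<lambda>y. cos (kp*y))"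
  by (simp_all add: AA_def)

lemma pu: "part 0 (uu k kp) = sep2 (ff k) (\<lambda>x. - k * sin (k*x)) (\<lambda>_. 1) (gg k kp) (\<lambda>_. 0) (\<lambda>y. cos (kp*y))"
  "part 1 (uu k kp) = sep2 (ff k) (\<lambda>x. cos (k*x)) (\<lambda>_. 0) (gg k kp) (\<lambda>_. 1) (\<lambda>y. - kp * sin (kp*y))"
  "part 2 (uu k kp) = sep2 (ff1 k) (\<lambda>x. cos (k*x)) (\<lambda>_. 1) (gg1 k kp) (\<lambda>_. 1) (\<lambda>y. cos (kp*y))"
  unfolding uu_def by (rule part_eqs; rule D1s)+

lemma pu22: "part 2 (part 2 (uu k kp)) = sep2 (ff2 k) (\<lambda>x. cos (k*x)) (\<lambda>_. 1) (gg2 k kp) (\<lambda>_. 1) (\<lambda>y. cos (kp*y))"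
  unfolding pu by (rule part_eqs; rule D1s)+

lemma C2_uu: "C2_fun (uu k kp)"
proof -
  have "C1_fun (uu k kp)" unfolding uu_def by (rule sep2_C1; rule D1s)
  moreover have "C1_fun (part i (uu k kp))" if "i < 3" for i
  proof -
    have "i = 0 \<or> i = 1 \<or> i = 2" using that by auto
    moreover have "C1_fun (part 0 (uu k kp))" unfolding pu by (rule sep2_C1; rule D1s)
    moreover have "C1_fun (part 1 (uu k kp))" unfolding pu by (rule sep2_C1; rule D1s)
    moreover have "C1_fun (part 2 (uu k kp))" unfolding pu by (rule sep2_C1; rule D1s)
    ultimately show ?thesis by auto
  qed
  ultimately show ?thesis unfolding C2_fun_def by auto
qed

lemma C1_AA: "C1_fun (AA k kp i j)"
  unfolding AA_def by (auto intro!: sep2_C1 intro: D1s)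

lemma pde:
  assumes k: "k \<noteq> 0" "kp \<noteq> 0"
  shows "part 2 (part 2 (uu k kp)) x y t + div_form (AA k kp) (uu k kp) x y t = 0"
proof -
  have s: "{..<2::nat} = {0,1}" by auto
  have d: "div_form (AA k kp) (uu k kp) x y t =
      part 0 (\<lambda>x y t. AA k kp 0 0 x y t * part 0 (uu k kp) x y t) x y t
    + part 0 (\<lambda>x y t. AA k kp 0 1 x y t * part 1 (uu k kp) x y t) x y t
    + part 1 (\<lambda>x y t. AA k kp 1 0 x y t * part 0 (uu k kp) x y t) x y t
    + part 1 (\<lambda>x y t. AA k kp 1 1 x y t * part 1 (uu k kp) x y t) x y t"
    unfolding div_form_def s by simp
  note t1 = part_mult(1)[OF sep2_dx[OF D1_const D1_cos[of k]] sep2_dx[OF D1_msin[of k] D1_const]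
       sep2_dy[OF D1_const D1_cos[of kp]] sep2_dy[OF D1_const D1_cos[of kp]]]
  note t2 = part_mult(1)[OF sep2_dx[OF D1_const D1_sin[of k]] sep2_dx[OF D1_cos[of k] D1_const]
       sep2_dy[OF D1_const D1_sin[of kp]] sep2_dy[OF D1_const D1_msin[of kp]]]
  note t3 = part_mult(2)[OF sep2_dx[OF D1_const D1_sin[of k]] sep2_dx[OF D1_msin[of k] D1_const]
       sep2_dy[OF D1_const D1_sin[of kp]] sep2_dy[OF D1_const D1_cos[of kp]]]
  note t4 = part_mult(2)[OF sep2_dx[OF D1_const D1_cos[of k]] sep2_dx[OF D1_cos[of k] D1_const]
       sep2_dy[OF D1_const D1_cos[of kp]] sep2_dy[OF D1_const D1_msin[of kp]]]
  have "part 2 (part 2 (uu k kp)) x y t + div_form (AA k kp) (uu k kp) x y t =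
     (ff2 k t - p0 k t * k^2 * ff k t - St k kp t * gg k kp t) * cos (k*x)
   + (gg2 k kp t - s0 kp t * kp^2 * gg k kp t - Rt k kp t * ff k t) * cos (kp*y)"
    unfolding d pu22 unfolding AA_eqs pu t1 t2 t3 t4
    using k
    apply (simp add: sep2_def field_simps)
    apply (insert sin_cos_squared_add[of "k*x"] sin_cos_squared_add[of "kp*y"])
    apply algebra
    done
  then show ?thesis using ode1[OF k(1)] ode2[OF k(2)] by simp
qed

lemma absD: "\<bar>a\<bar> \<le> b \<Longrightarrow> a \<le> b \<and> -a \<le> (b::real)" by auto

lemma linq:
  fixes X Y Z W AX DY :: real
  assumes "9/10*X \<le> AX" "AX \<le> 16*X" "1/20*Y \<le> DY" "DY \<le> 3*Y" "W \<le> 1/100*Z" "-W \<le> 1/100*Z"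
    "2*Z \<le> X+Y" "0\<le>X" "0\<le>Y" "0\<le>Z"
  shows "1/80*(X+Y) \<le> AX + W + DY \<and> AX + W + DY \<le> 80*(X+Y)"
proof
  have e: "1/80*(X+Y) = 1/80*X + 1/80*Y" "80*(X+Y) = 80*X+80*Y" by simp_all
  show "1/80*(X+Y) \<le> AX + W + DY" unfolding e using assms by linarith
  show "AX + W + DY \<le> 80*(X+Y)" unfolding e using assms by linarith
qed

lemma quad:
  fixes a b1 b2 d x y :: real
  assumes "9/10 \<le> a" "a \<le> 16" "\<bar>b1\<bar> \<le> 1/200" "\<bar>b2\<bar> \<le> 1/200" "1/20 \<le> d" "d \<le> 3"
  shows "1/80 * (x^2 + y^2) \<le> x*a*x + x*b1*y + y*b2*x + y*d*y \<and> x*a*x + x*b1*y + y*b2*x + y*d*y \<le> 80 * (x^2 + y^2)"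
proof -
  have xy: "2 * \<bar>x*y\<bar> \<le> x^2 + y^2"
  proof -
    have "0 \<le> (\<bar>x\<bar> - \<bar>y\<bar>)^2" by simp
    then show ?thesis by (simp add: power2_eq_square algebra_simps abs_mult)
  qed
  have x2: "0 \<le> x^2" "0 \<le> y^2" by simp_all
  have ax: "9/10 * x^2 \<le> a * x^2" "a * x^2 \<le> 16 * x^2"
    by (rule mult_right_mono[OF assms(1) x2(1)], rule mult_right_mono[OF assms(2) x2(1)])
  have dy: "1/20 * y^2 \<le> d * y^2" "d * y^2 \<le> 3 * y^2"
    by (rule mult_right_mono[OF assms(5) x2(2)], rule mult_right_mono[OF assms(6) x2(2)])
  have bb: "\<bar>b1 + b2\<bar> \<le> 1/100" using assms(3,4) abs_triangle_ineq[of b1 b2] by linarith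
  have b: "\<bar>(b1 + b2) * (x*y)\<bar> \<le> 1/100 * \<bar>x*y\<bar>"
    unfolding abs_mult[of "b1+b2"] by (rule mult_right_mono[OF bb abs_ge_zero])
  have e: "x*a*x + x*b1*y + y*b2*x + y*d*y = a * x^2 + (b1 + b2) * (x*y) + d * y^2"
    by (simp add: power2_eq_square algebra_simps)
  have b1: "(b1 + b2) * (x*y) \<le> 1/100 * \<bar>x*y\<bar>" "- ((b1 + b2) * (x*y)) \<le> 1/100 * \<bar>x*y\<bar>"
    using absD[OF b] by auto
  show ?thesis unfolding e by (rule linq[OF ax dy b1 xy x2 abs_ge_zero])
qed

lemma p0_b: assumes "k \<ge> 10^10" shows "99/100 \<le> p0 k t \<and> p0 k t \<le> 31/2 \<and> \<bar>p01 k t\<bar> \<le> 58"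
proof -
  have k1: "k \<ge> 10000" using assms by simp
  from Psi_b have a: "1 \<le> Psi1 t" "Psi1 t \<le> 47/12" "\<bar>Psi2 t\<bar> \<le> 35/6" "\<bar>Psi3 t\<bar> \<le> 70/9" by auto
  have m1: "1 * 1 \<le> Psi1 t * Psi1 t" using a by (intro mult_mono) auto
  have m2: "Psi1 t * Psi1 t \<le> 47/12 * (47/12)" using a by (intro mult_mono) auto
  have m3: "\<bar>Psi2 t / k\<bar> \<le> 1/100"
    using a k1 by (simp add: abs_divide divide_le_eq)
  have m4: "\<bar>Psi3 t / k\<bar> \<le> 1"
    using a k1 by (simp add: abs_divide divide_le_eq)
  have m5: "\<bar>2 * Psi1 t * Psi2 t\<bar> \<le> 2 * (47/12) * (35/6)"
    unfolding abs_mult using a by (intro mult_mono) auto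
  show ?thesis unfolding p0_def p01_def power2_eq_square using m1 m2 absD[OF m3] absD[OF m4] absD[OF m5] by linarith
qed

lemma s0_b: assumes "kp \<ge> 10^10" shows "1/10 \<le> s0 kp t \<and> s0 kp t \<le> 2 \<and> \<bar>s01 kp t\<bar> \<le> 58"
proof -
  have k1: "kp \<ge> 10000" using assms by simp
  from Phi_b have a: "11/32 \<le> Phi1 t" "Phi1 t \<le> 1" "\<bar>Phi2 t\<bar> \<le> 63/16" "\<bar>Phi3 t\<bar> \<le> 63/4" by auto
  have m1: "11/32 * (11/32) \<le> Phi1 t * Phi1 t" using a by (intro mult_mono) auto
  have m2: "Phi1 t * Phi1 t \<le> 1 * 1" using a by (intro mult_mono) auto
  have m3: "\<bar>Phi2 t / kp\<bar> \<le> 1/100"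
    using a k1 by (simp add: abs_divide divide_le_eq)
  have m4: "\<bar>Phi3 t / kp\<bar> \<le> 1"
    using a k1 by (simp add: abs_divide divide_le_eq)
  have m5: "\<bar>2 * Phi1 t * Phi2 t\<bar> \<le> 2 * 1 * (63/16)"
    unfolding abs_mult using a by (intro mult_mono) auto
  show ?thesis unfolding s0_def s01_def power2_eq_square using m1 m2 absD[OF m3] absD[OF m4] absD[OF m5] by linarith
qed

lemma dAA:
  "part 0 (AA k kp 0 0) = sep2 (p0 k) (\<lambda>_. 0) (\<lambda>_. 1) (\<lambda>t. Rt k kp t / k^2) (\<lambda>x. - k * sin (k*x)) (\<lambda>y. cos (kp*y))"
  "part 1 (AA k kp 0 0) = sep2 (p0 k) (\<lambda>_. 1) (\<lambda>_. 0) (\<lambda>t. Rt k kp t / k^2) (\<lambda>x. cos (k*x)) (\<lambda>y. - kp * sin (kp*y))"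
  "part 2 (AA k kp 0 0) = sep2 (p01 k) (\<lambda>_. 1) (\<lambda>_. 1) (\<lambda>t. Rt1 k kp t / k^2) (\<lambda>x. cos (k*x)) (\<lambda>y. cos (kp*y))"
  "part 0 (AA k kp 0 1) = sep2 (\<lambda>_. 0) (\<lambda>_. 0) (\<lambda>_. 1) (\<lambda>t. 2 * St k kp t / (k*kp)) (\<lambda>x. k * cos (k*x)) (\<lambda>y. sin (kp*y))"
  "part 1 (AA k kp 0 1) = sep2 (\<lambda>_. 0) (\<lambda>_. 1) (\<lambda>_. 0) (\<lambda>t. 2 * St k kp t / (k*kp)) (\<lambda>x. sin (k*x)) (\<lambda>y. kp * cos (kp*y))"
  "part 2 (AA k kp 0 1) = sep2 (\<lambda>_. 0) (\<lambda>_. 1) (\<lambda>_. 1) (\<lambda>t. 2 * St1 k kp t / (k*kp)) (\<lambda>x. sin (k*x)) (\<lambda>y. sin (kp*y))"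
  "part 0 (AA k kp 1 0) = sep2 (\<lambda>_. 0) (\<lambda>_. 0) (\<lambda>_. 1) (\<lambda>t. 2 * Rt k kp t / (k*kp)) (\<lambda>x. k * cos (k*x)) (\<lambda>y. sin (kp*y))"
  "part 1 (AA k kp 1 0) = sep2 (\<lambda>_. 0) (\<lambda>_. 1) (\<lambda>_. 0) (\<lambda>t. 2 * Rt k kp t / (k*kp)) (\<lambda>x. sin (k*x)) (\<lambda>y. kp * cos (kp*y))"
  "part 2 (AA k kp 1 0) = sep2 (\<lambda>_. 0) (\<lambda>_. 1) (\<lambda>_. 1) (\<lambda>t. 2 * Rt1 k kp t / (k*kp)) (\<lambda>x. sin (k*x)) (\<lambda>y. sin (kp*y))"
  "part 0 (AA k kp 1 1) = sep2 (s0 kp) (\<lambda>_. 0) (\<lambda>_. 1) (\<lambda>t. St k kp t / kp^2) (\<lambda>x. - k * sin (k*x)) (\<lambda>y. cos (kp*y))"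
  "part 1 (AA k kp 1 1) = sep2 (s0 kp) (\<lambda>_. 1) (\<lambda>_. 0) (\<lambda>t. St k kp t / kp^2) (\<lambda>x. cos (k*x)) (\<lambda>y. - kp * sin (kp*y))"
  "part 2 (AA k kp 1 1) = sep2 (s01 kp) (\<lambda>_. 1) (\<lambda>_. 1) (\<lambda>t. St1 k kp t / kp^2) (\<lambda>x. cos (k*x)) (\<lambda>y. cos (kp*y))"
  unfolding AA_eqs by (rule part_eqs; rule D1s)+

lemma h4: "\<bar>r\<bar> \<le> 1 \<Longrightarrow> \<bar>s\<bar> \<le> 1 \<Longrightarrow> \<bar>c\<bar> \<le> 1 \<Longrightarrow> \<bar>m\<bar> \<le> (1::real) \<Longrightarrow> \<bar>r * s * c * m\<bar> \<le> 1"
  by (simp add: abs_mult mult_le_one)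

lemma trig1: "\<bar>sin (x::real)\<bar> \<le> 1" "\<bar>cos x\<bar> \<le> 1" by simp_all

lemma fin60: "v = r * s * c * m \<Longrightarrow> \<bar>r\<bar> \<le> 1 \<Longrightarrow> \<bar>s\<bar> \<le> 1 \<Longrightarrow> \<bar>c\<bar> \<le> 1 \<Longrightarrow> \<bar>m\<bar> \<le> (1::real) \<Longrightarrow> \<bar>v\<bar> \<le> 60"
  using h4[of r s c m] by simp
lemma fin60b: "v = p + r * s * c * m \<Longrightarrow> \<bar>p\<bar> \<le> 58 \<Longrightarrow> \<bar>r\<bar> \<le> 1 \<Longrightarrow> \<bar>s\<bar> \<le> 1 \<Longrightarrow> \<bar>c\<bar> \<le> 1 \<Longrightarrow> \<bar>m\<bar> \<le> (1::real) \<Longrightarrow> \<bar>v\<bar> \<le> 60"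
  using h4[of r s c m] by (simp add: abs_le_iff; linarith)

lemma pAA_b:
  assumes k: "k \<ge> 10^10" "k < kp" "kp \<le> 2*k" and ijl: "i < 2" "j < 2" "l < 3"
  shows "\<bar>part l (AA k kp i j) x y t\<bar> \<le> 60"
proof -
  have k0: "k > 0" "kp > 0" "k \<ge> 2" "kp \<ge> 2" using k by auto
  have R: "\<bar>Rt k kp t\<bar> \<le> 1" "\<bar>Rt1 k kp t\<bar> \<le> 1" using Rt_b[OF k] by auto
  have S: "\<bar>St k kp t\<bar> \<le> 1" "\<bar>St1 k kp t\<bar> \<le> 1" using St_b[OF k] by auto
  have P: "\<bar>p01 k t\<bar> \<le> 58" using p0_b[OF k(1)] by auto
  have Q: "\<bar>s01 kp t\<bar> \<le> 58" using s0_b[of kp t] k by auto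
  have sq: "2*k \<le> k*k" "kp*1 \<le> kp*kp" "k*kp \<ge> k*1"
    using k0 by (auto intro!: mult_right_mono mult_left_mono)
  have m: "\<bar>-1/k\<bar> \<le> 1" "\<bar>-kp/k^2\<bar> \<le> 1" "\<bar>1/k^2\<bar> \<le> 1" "\<bar>2/kp\<bar> \<le> 1" "\<bar>2/k\<bar> \<le> 1"
     "\<bar>2/(k*kp)\<bar> \<le> 1" "\<bar>-k/kp^2\<bar> \<le> 1" "\<bar>-1/kp\<bar> \<le> 1" "\<bar>1/kp^2\<bar> \<le> 1"
  proof -
    show "\<bar>-1/k\<bar> \<le> 1" "\<bar>2/kp\<bar> \<le> 1" "\<bar>2/k\<bar> \<le> 1" "\<bar>-1/kp\<bar> \<le> 1" using k0 by auto
    have "kp \<le> k*k" "1 \<le> k*k" "k \<le> kp*kp" "1 \<le> kp*kp" "2 \<le> k*kp" using sq k k0 by linarith+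
    then show "\<bar>-kp/k^2\<bar> \<le> 1" "\<bar>1/k^2\<bar> \<le> 1" "\<bar>-k/kp^2\<bar> \<le> 1" "\<bar>1/kp^2\<bar> \<le> 1" "\<bar>2/(k*kp)\<bar> \<le> 1"
      using k0 by (simp_all add: power2_eq_square abs_divide abs_mult)
  qed
  have e0: "part 0 (AA k kp 0 0) x y t = Rt k kp t * sin (k*x) * cos (kp*y) * (-1/k)"
    unfolding dAA sep2_def using k0 by (simp add: field_simps power2_eq_square)
  have c0: "\<bar>part 0 (AA k kp 0 0) x y t\<bar> \<le> 60"
    by (rule fin60[OF e0]) (use R S m k0 in simp_all)
  have e1: "part 1 (AA k kp 0 0) x y t = Rt k kp t * cos (k*x) * sin (kp*y) * (-kp/k^2)"
    unfolding dAA sep2_def using k0 by (simp add: field_simps power2_eq_square)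
  have c1: "\<bar>part 1 (AA k kp 0 0) x y t\<bar> \<le> 60"
    by (rule fin60[OF e1]) (use R S m k0 in simp_all)
  have e2: "part 2 (AA k kp 0 0) x y t = p01 k t + Rt1 k kp t * cos (k*x) * cos (kp*y) * (1/k^2)"
    unfolding dAA sep2_def using k0 by (simp add: field_simps power2_eq_square)
  have c2: "\<bar>part 2 (AA k kp 0 0) x y t\<bar> \<le> 60"
    by (rule fin60b[OF e2]) (use R S P Q m k0 in simp_all)
  have e3: "part 0 (AA k kp 0 1) x y t = St k kp t * cos (k*x) * sin (kp*y) * (2/kp)"
    unfolding dAA sep2_def using k0 by (simp add: field_simps power2_eq_square)
  have c3: "\<bar>part 0 (AA k kp 0 1) x y t\<bar> \<le> 60"
    by (rule fin60[OF e3]) (use R S m k0 in simp_all)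
  have e4: "part 1 (AA k kp 0 1) x y t = St k kp t * sin (k*x) * cos (kp*y) * (2/k)"
    unfolding dAA sep2_def using k0 by (simp add: field_simps power2_eq_square)
  have c4: "\<bar>part 1 (AA k kp 0 1) x y t\<bar> \<le> 60"
    by (rule fin60[OF e4]) (use R S m k0 in simp_all)
  have e5: "part 2 (AA k kp 0 1) x y t = St1 k kp t * sin (k*x) * sin (kp*y) * (2/(k*kp))"
    unfolding dAA sep2_def using k0 by (simp add: field_simps power2_eq_square)
  have c5: "\<bar>part 2 (AA k kp 0 1) x y t\<bar> \<le> 60"
    by (rule fin60[OF e5]) (use R S m k0 in simp_all)
  have e6: "part 0 (AA k kp 1 0) x y t = Rt k kp t * cos (k*x) * sin (kp*y) * (2/kp)"
    unfolding dAA sep2_def using k0 by (simp add: field_simps power2_eq_square)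
  have c6: "\<bar>part 0 (AA k kp 1 0) x y t\<bar> \<le> 60"
    by (rule fin60[OF e6]) (use R S m k0 in simp_all)
  have e7: "part 1 (AA k kp 1 0) x y t = Rt k kp t * sin (k*x) * cos (kp*y) * (2/k)"
    unfolding dAA sep2_def using k0 by (simp add: field_simps power2_eq_square)
  have c7: "\<bar>part 1 (AA k kp 1 0) x y t\<bar> \<le> 60"
    by (rule fin60[OF e7]) (use R S m k0 in simp_all)
  have e8: "part 2 (AA k kp 1 0) x y t = Rt1 k kp t * sin (k*x) * sin (kp*y) * (2/(k*kp))"
    unfolding dAA sep2_def using k0 by (simp add: field_simps power2_eq_square)
  have c8: "\<bar>part 2 (AA k kp 1 0) x y t\<bar> \<le> 60"
    by (rule fin60[OF e8]) (use R S m k0 in simp_all)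
  have e9: "part 0 (AA k kp 1 1) x y t = St k kp t * sin (k*x) * cos (kp*y) * (-k/kp^2)"
    unfolding dAA sep2_def using k0 by (simp add: field_simps power2_eq_square)
  have c9: "\<bar>part 0 (AA k kp 1 1) x y t\<bar> \<le> 60"
    by (rule fin60[OF e9]) (use R S m k0 in simp_all)
  have e10: "part 1 (AA k kp 1 1) x y t = St k kp t * cos (k*x) * sin (kp*y) * (-1/kp)"
    unfolding dAA sep2_def using k0 by (simp add: field_simps power2_eq_square)
  have c10: "\<bar>part 1 (AA k kp 1 1) x y t\<bar> \<le> 60"
    by (rule fin60[OF e10]) (use R S m k0 in simp_all)
  have e11: "part 2 (AA k kp 1 1) x y t = s01 kp t + St1 k kp t * cos (k*x) * cos (kp*y) * (1/kp^2)"
    unfolding dAA sep2_def using k0 by (simp add: field_simps power2_eq_square)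
  have c11: "\<bar>part 2 (AA k kp 1 1) x y t\<bar> \<le> 60"
    by (rule fin60b[OF e11]) (use R S P Q m k0 in simp_all)
  have "i = 0 \<or> i = 1" "j = 0 \<or> j = 1" "l = 0 \<or> l = 1 \<or> l = 2" using ijl by auto
  then show ?thesis using c0 c1 c2 c3 c4 c5 c6 c7 c8 c9 c10 c11 by auto
qed

lemma near: "v = p + r * s * c * m \<Longrightarrow> \<bar>r\<bar> \<le> 1 \<Longrightarrow> \<bar>s\<bar> \<le> 1 \<Longrightarrow> \<bar>c\<bar> \<le> 1 \<Longrightarrow> \<bar>m\<bar> \<le> (e::real) \<Longrightarrow>
   p - e \<le> v \<and> v \<le> p + e"
proof -
  assume a: "v = p + r * s * c * m" "\<bar>r\<bar> \<le> 1" "\<bar>s\<bar> \<le> 1" "\<bar>c\<bar> \<le> 1" "\<bar>m\<bar> \<le> e"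
  have "\<bar>r * s * c\<bar> \<le> 1" using h4[of r s c 1] a by simp
  moreover have "\<bar>r * s * c * m\<bar> = \<bar>r * s * c\<bar> * \<bar>m\<bar>" by (rule abs_mult)
  moreover have "\<bar>r * s * c\<bar> * \<bar>m\<bar> \<le> 1 * e"
    by (rule mult_mono) (use a \<open>\<bar>r * s * c\<bar> \<le> 1\<close> in auto)
  ultimately have "\<bar>r * s * c * m\<bar> \<le> 1 * e" by simp
  then show ?thesis using a(1) by (simp add: abs_le_iff; linarith)
qed

lemma reg:
  assumes k: "k \<ge> 10^10" "k < kp" "kp \<le> 2*k"
  shows "regclass 80 60 (AA k kp)"
proof -
  have k0: "k > 0" "kp > 0" using k by auto
  have R: "\<bar>Rt k kp t\<bar> \<le> 1" "\<bar>St k kp t\<bar> \<le> 1" for t using Rt_b[OF k] St_b[OF k] by auto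
  have kk: "10000 \<le> k*k" "10000 \<le> kp * kp" "400 \<le> k * kp"
  proof -
    have "100 * 100 \<le> k * k" "100 * 100 \<le> kp * kp" "20 * 20 \<le> k * kp" using k by (intro mult_mono; simp)+
    then show "10000 \<le> k*k" "10000 \<le> kp * kp" "400 \<le> k * kp" by simp_all
  qed
  have m: "\<bar>1/k^2\<bar> \<le> 1/100" "\<bar>1/kp^2\<bar> \<le> 1/100" "\<bar>2/(k*kp)\<bar> \<le> 1/200"
    using kk k0 by (simp_all add: power2_eq_square abs_divide abs_mult divide_le_eq)
  have q: "1/80 * ((\<xi> 0)\<^sup>2 + (\<xi> 1)\<^sup>2) \<le> (\<Sum>i<2. \<Sum>j<2. \<xi> i * AA k kp i j x y t * \<xi> j) \<and>
        (\<Sum>i<2. \<Sum>j<2. \<xi> i * AA k kp i j x y t * \<xi> j) \<le> 80 * ((\<xi> 0)\<^sup>2 + (\<xi> 1)\<^sup>2)" for x y t and \<xi> :: "nat \<Rightarrow> real"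
  proof -
    have s2: "{..<2::nat} = {0,1}" by auto
    have sum: "(\<Sum>i<2. \<Sum>j<2. \<xi> i * AA k kp i j x y t * \<xi> j) =
       \<xi> 0 * AA k kp 0 0 x y t * \<xi> 0 + \<xi> 0 * AA k kp 0 1 x y t * \<xi> 1 + \<xi> 1 * AA k kp 1 0 x y t * \<xi> 0 + \<xi> 1 * AA k kp 1 1 x y t * \<xi> 1"
      unfolding s2 by simp
    have e00: "AA k kp 0 0 x y t = p0 k t + Rt k kp t * cos (k*x) * cos (kp*y) * (1/k^2)"
      unfolding AA_eqs sep2_def by simp
    have e01: "AA k kp 0 1 x y t = 0 + St k kp t * sin (k*x) * sin (kp*y) * (2/(k*kp))"
      unfolding AA_eqs sep2_def by simp
    have e10: "AA k kp 1 0 x y t = 0 + Rt k kp t * sin (k*x) * sin (kp*y) * (2/(k*kp))"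
      unfolding AA_eqs sep2_def by simp
    have e11: "AA k kp 1 1 x y t = s0 kp t + St k kp t * cos (k*x) * cos (kp*y) * (1/kp^2)"
      unfolding AA_eqs sep2_def by simp
    note n00 = near[OF e00 R(1) trig1(2) trig1(2) m(1)]
    note n01 = near[OF e01 R(2) trig1(1) trig1(1) m(3)]
    note n10 = near[OF e10 R(1) trig1(1) trig1(1) m(3)]
    note n11 = near[OF e11 R(2) trig1(2) trig1(2) m(2)]
    have p: "99/100 \<le> p0 k t \<and> p0 k t \<le> 31/2" "1/10 \<le> s0 kp t \<and> s0 kp t \<le> 2"
      using p0_b[OF k(1)] s0_b[of kp t] k by auto
    show ?thesis unfolding sum
      by (rule quad) (use n00 n01 n10 n11 p in \<open>auto simp: abs_le_iff\<close>)
  qed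
  show ?thesis unfolding regclass_def
    using q C1_AA pAA_b[OF k] by auto
qed

lemma uu_lo: "t \<le> 1/100 \<Longrightarrow> uu k kp x y t = cos (k*x) * exp (- k * t)"
  using phi_lo[of t] Psi_lo[of t] psi_lo[of t]
  by (simp add: uu_def sep2_def ff_def gg_def)

lemma uu_hi: "t \<ge> 999/100 \<Longrightarrow> uu k kp x y t = cc k kp * cos (kp*y) * exp (- kp * t)"
  using phi_hi[of t] Phi_hi[of t] psi_hi[of t]
  by (simp add: uu_def sep2_def ff_def gg_def)

lemma AA_id:
  assumes "t \<le> 1/100 \<or> t \<ge> 999/100" "i < 2" "j < 2"
  shows "AA k kp i j x y t = idmat i j"
proof -
  have R: "Rt k kp t = 0" using assms(1) psi_lo[of t] psi_hi[of t] by (auto simp: Rt_def)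
  have S: "St k kp t = 0" using assms(1) phi_lo[of t] phi_hi[of t] by (auto simp: St_def)
  have P: "p0 k t = 1" using assms(1) Psi_lo[of t] Psi_hi[of t] by (auto simp: p0_def)
  have Q: "s0 kp t = 1" using assms(1) Phi_lo[of t] Phi_hi[of t] by (auto simp: s0_def)
  have "i = 0 \<or> i = 1" "j = 0 \<or> j = 1" using assms by auto
  then show ?thesis using R S P Q by (auto simp: AA_def sep2_def idmat_def)
qed

lemma per_cos: "cos (real_of_int a * (x + 2*pi)) = cos (real_of_int a * x)"
proof -
  have "real_of_int a * (x + 2*pi) = real_of_int a * x + (2*pi) * real_of_int a" by (simp add: algebra_simps)
  then show ?thesis by (simp add: cos_add)
qed
lemma per_sin: "sin (real_of_int a * (x + 2*pi)) = sin (real_of_int a * x)"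
proof -
  have "real_of_int a * (x + 2*pi) = real_of_int a * x + (2*pi) * real_of_int a" by (simp add: algebra_simps)
  then show ?thesis by (simp add: sin_add)
qed

lemma per_uu: "periodic2 (uu (real_of_int a) (real_of_int b))"
  unfolding periodic2_def uu_def sep2_def by (simp add: per_cos)
lemma per_AA: "periodic2 (AA (real_of_int a) (real_of_int b) i j)"
  unfolding periodic2_def AA_def sep2_def by (simp add: per_cos per_sin)

lemma bnd_mul: "\<bar>X\<bar> \<le> B \<Longrightarrow> 0 \<le> e \<Longrightarrow> e \<le> E \<Longrightarrow> B \<le> B' \<Longrightarrow> \<bar>X * e\<bar> \<le> B' * (E::real)"
proof -
  assume a: "\<bar>X\<bar> \<le> B" "0 \<le> e" "e \<le> E" "B \<le> B'"
  have "\<bar>X * e\<bar> = \<bar>X\<bar> * e" using a by (simp add: abs_mult)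
  also have "\<dots> \<le> B' * E" using a by (intro mult_mono) auto
  finally show ?thesis .
qed

lemma f_b:
  fixes k t :: real
  assumes k: "k \<ge> 10^10" and t: "t \<ge> 0"
  shows "\<bar>ff k t\<bar> \<le> 200 * exp (- k * t)"
    "\<bar>ff1 k t\<bar> \<le> 200 * k powr (7/3) * exp (- k * t)"
    "\<bar>ff2 k t\<bar> \<le> 200 * k powr (14/3) * exp (- k * t)"
proof -
  have k1: "k \<ge> 1" using k by simp
  have E: "exp (- k * Psi t) \<le> exp (- k * t)"
    using mult_left_mono[OF Psi_b(1)[of t], of k] k1 by simp
  have E0: "0 \<le> exp (- k * Psi t)" by simp
  have ph: "0 \<le> phi t" "phi t \<le> 1" "\<bar>phi1 t\<bar> \<le> 35/8" "\<bar>phi2 t\<bar> \<le> 105" using phi_b by auto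
  have Ps: "1 \<le> Psi1 t" "Psi1 t \<le> 47/12" "\<bar>Psi2 t\<bar> \<le> 35/6" using Psi_b by auto
  have kk: "k * 1 \<le> k * k" using k1 by (intro mult_left_mono) auto
  have pw1: "k \<le> k powr (7/3)" using powr_mono[of 1 "7/3" k] k1 by simp
  have pw2: "k^2 \<le> k powr (14/3)" using powr_mono[of 2 "14/3" k] k1 by (simp add: powr_realpow)
  show "\<bar>ff k t\<bar> \<le> 200 * exp (- k * t)"
    unfolding ff_def by (rule bnd_mul[of _ 1]) (use ph E in auto)
  have a1: "0 \<le> Psi1 t * phi t" using Ps ph by simp
  have a1b: "Psi1 t * phi t \<le> 47/12 * 1" by (rule mult_mono) (use Ps ph in auto)
  have a1': "0 \<le> k * (Psi1 t * phi t)" "k * (Psi1 t * phi t) \<le> k * (47/12 * 1)"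
    using a1 a1b k1 by (auto intro: mult_left_mono)
  have "\<bar>phi1 t - k * Psi1 t * phi t\<bar> \<le> 35/8 + k * (47/12)"
    using a1' ph by (simp add: abs_le_iff mult.assoc; linarith)
  then show "\<bar>ff1 k t\<bar> \<le> 200 * k powr (7/3) * exp (- k * t)"
    unfolding ff1_def
    by (rule bnd_mul) (use E pw1 k1 in auto)
  have b1: "\<bar>2 * k * Psi1 t\<bar> \<le> 2 * k * (47/12)" using Ps k1 by (simp add: abs_mult)
  have b2: "\<bar>2 * k * Psi1 t * phi1 t\<bar> \<le> 2 * k * (47/12) * (35/8)" by (rule absmm[OF b1 ph(3)])
  have b3: "(Psi1 t)^2 \<le> 2209/144" using power_mono[of "Psi1 t" "47/12" 2] Ps by (simp add: power2_eq_square)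
  have b4: "0 \<le> (Psi1 t)^2" by simp
  have b5: "k^2 * (Psi1 t)^2 \<le> k^2 * (2209/144)" using b3 by (intro mult_left_mono) auto
  have b5': "0 \<le> k^2 * (Psi1 t)^2" by simp
  have b6: "\<bar>k * Psi2 t\<bar> \<le> k * (35/6)" using Ps k1 by (simp add: abs_mult)
  have b7: "\<bar>k^2 * (Psi1 t)^2 - k * Psi2 t\<bar> \<le> k^2 * (2209/144) + k * (35/6)"
  proof -
    have "\<bar>k^2 * (Psi1 t)^2 - k * Psi2 t\<bar> \<le> \<bar>k^2 * (Psi1 t)^2\<bar> + \<bar>k * Psi2 t\<bar>" by (rule abs_triangle_ineq4)
    moreover have "\<bar>k^2 * (Psi1 t)^2\<bar> = k^2 * (Psi1 t)^2" using b5' by (rule abs_of_nonneg)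
    ultimately show ?thesis using b5 b6 by linarith
  qed
  have b8: "\<bar>(k^2 * (Psi1 t)^2 - k * Psi2 t) * phi t\<bar> \<le> (k^2 * (2209/144) + k * (35/6)) * 1"
    by (rule absmm[OF b7]) (use ph in auto)
  have tri: "\<bar>phi2 t - 2*k*Psi1 t*phi1 t + (k^2 * (Psi1 t)^2 - k * Psi2 t) * phi t\<bar>
      \<le> \<bar>phi2 t\<bar> + \<bar>2*k*Psi1 t*phi1 t\<bar> + \<bar>(k^2 * (Psi1 t)^2 - k * Psi2 t) * phi t\<bar>"
    by (rule order_trans[OF abs_triangle_ineq]) (simp add: abs_triangle_ineq4)
  have "\<bar>phi2 t - 2*k*Psi1 t*phi1 t + (k^2 * (Psi1 t)^2 - k * Psi2 t) * phi t\<bar>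
      \<le> 105 + 2 * k * (47/12) * (35/8) + (k^2 * (2209/144) + k * (35/6)) * 1"
    using tri ph(4) b2 b8 by linarith
  moreover have "105 + 2 * k * (47/12) * (35/8) + (k^2 * (2209/144) + k * (35/6)) * 1 \<le> 200 * k powr (14/3)"
  proof -
    have "k \<le> k*k" using kk by simp
    then have "k \<le> k^2" "1 \<le> k^2" using k1 unfolding power2_eq_square by linarith+
    moreover have "105 + 2 * k * (47/12) * (35/8) + (k^2 * (2209/144) + k * (35/6)) * 1 = 105 + 1925/48 * k + 2209/144 * k^2"
      by (simp add: algebra_simps)
    ultimately show ?thesis using pw2 k1 by linarith
  qed
  ultimately show "\<bar>ff2 k t\<bar> \<le> 200 * k powr (14/3) * exp (- k * t)"
    unfolding ff2_def
    by (intro bnd_mul[OF _ E0 E]) auto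
qed

lemma g_b:
  fixes k kp t :: real
  assumes k: "kp \<ge> 1" and t: "t \<ge> 0"
  shows "\<bar>gg k kp t\<bar> \<le> 200 * cc k kp * exp (- kp * t / 3)"
    "\<bar>gg1 k kp t\<bar> \<le> 200 * kp * cc k kp * exp (- kp * t / 3)"
    "\<bar>gg2 k kp t\<bar> \<le> 200 * kp^2 * cc k kp * exp (- kp * t / 3)"
proof -
  have c0: "0 < cc k kp" by (rule cc_pos)
  have E: "exp (- kp * Phi t) \<le> exp (- kp * t / 3)"
  proof -
    have "kp * t \<le> kp * Phi t" using mult_left_mono[OF Phi_b(1)[of t], of kp] k by simp
    moreover have "0 \<le> kp * t" using k t by simp
    ultimately show ?thesis by simp
  qed
  have E0: "0 \<le> exp (- kp * Phi t)" by simp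
  have ps: "0 \<le> psi t" "psi t \<le> 1" "0 \<le> psi1 t" "psi1 t \<le> 35/16" "\<bar>psi2 t\<bar> \<le> 105/4" using psi_b by auto
  have Ph: "11/32 \<le> Phi1 t" "Phi1 t \<le> 1" "\<bar>Phi2 t\<bar> \<le> 63/16" using Phi_b by auto
  have kk: "kp * 1 \<le> kp * kp" using k by (intro mult_left_mono) auto
  then have kk2: "kp \<le> kp^2" "1 \<le> kp^2" using k unfolding power2_eq_square by linarith+
  have ac: "\<And>Y B. \<bar>Y\<bar> \<le> B \<Longrightarrow> \<bar>cc k kp * Y\<bar> \<le> cc k kp * B"
    using c0 by (simp add: abs_mult)
  show "\<bar>gg k kp t\<bar> \<le> 200 * cc k kp * exp (- kp * t / 3)"
    unfolding gg_def
    by (rule bnd_mul[OF _ E0 E, of _ "cc k kp * 1"]) (use ac[of "psi t" 1] ps c0 in auto)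
  have a1: "0 \<le> Phi1 t * psi t" using Ph ps by simp
  have a1b: "Phi1 t * psi t \<le> 1 * 1" by (rule mult_mono) (use Ph ps in auto)
  have a1': "0 \<le> kp * (Phi1 t * psi t)" "kp * (Phi1 t * psi t) \<le> kp * (1 * 1)"
    using a1 a1b k by (auto intro: mult_left_mono)
  have "\<bar>psi1 t - kp * Phi1 t * psi t\<bar> \<le> 35/16 + kp"
    using a1' ps by (simp add: abs_le_iff mult.assoc; linarith)
  then have "\<bar>cc k kp * (psi1 t - kp * Phi1 t * psi t)\<bar> \<le> cc k kp * (35/16 + kp)" by (rule ac)
  moreover have "cc k kp * (35/16 + kp) \<le> 200 * kp * cc k kp"
  proof -
    have "35/16 + kp \<le> 200 * kp" using k by linarith
    then show ?thesis using c0 by (simp add: mult.commute mult_left_mono)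
  qed
  ultimately show "\<bar>gg1 k kp t\<bar> \<le> 200 * kp * cc k kp * exp (- kp * t / 3)"
    unfolding gg1_def by (intro bnd_mul[OF _ E0 E]) auto
  have b1: "\<bar>2 * kp * Phi1 t\<bar> \<le> 2 * kp * 1" using Ph k by (simp add: abs_mult)
  have b2: "\<bar>2 * kp * Phi1 t * psi1 t\<bar> \<le> 2 * kp * 1 * (35/16)" by (rule absmm[OF b1]) (use ps in auto)
  have b3: "(Phi1 t)^2 \<le> 1" using power_mono[of "Phi1 t" 1 2] Ph by simp
  have b5: "kp^2 * (Phi1 t)^2 \<le> kp^2 * 1" using b3 by (intro mult_left_mono) auto
  have b5': "0 \<le> kp^2 * (Phi1 t)^2" by simp
  have b6: "\<bar>kp * Phi2 t\<bar> \<le> kp * (63/16)" using Ph k by (simp add: abs_mult)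
  have b7: "\<bar>kp^2 * (Phi1 t)^2 - kp * Phi2 t\<bar> \<le> kp^2 * 1 + kp * (63/16)"
  proof -
    have "\<bar>kp^2 * (Phi1 t)^2 - kp * Phi2 t\<bar> \<le> \<bar>kp^2 * (Phi1 t)^2\<bar> + \<bar>kp * Phi2 t\<bar>" by (rule abs_triangle_ineq4)
    moreover have "\<bar>kp^2 * (Phi1 t)^2\<bar> = kp^2 * (Phi1 t)^2" using b5' by (rule abs_of_nonneg)
    ultimately show ?thesis using b5 b6 by linarith
  qed
  have b8: "\<bar>(kp^2 * (Phi1 t)^2 - kp * Phi2 t) * psi t\<bar> \<le> (kp^2 * 1 + kp * (63/16)) * 1"
    by (rule absmm[OF b7]) (use ps in auto)
  have tri: "\<bar>psi2 t - 2*kp*Phi1 t*psi1 t + (kp^2 * (Phi1 t)^2 - kp * Phi2 t) * psi t\<bar>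
      \<le> \<bar>psi2 t\<bar> + \<bar>2*kp*Phi1 t*psi1 t\<bar> + \<bar>(kp^2 * (Phi1 t)^2 - kp * Phi2 t) * psi t\<bar>"
    by (rule order_trans[OF abs_triangle_ineq]) (simp add: abs_triangle_ineq4)
  have "\<bar>psi2 t - 2*kp*Phi1 t*psi1 t + (kp^2 * (Phi1 t)^2 - kp * Phi2 t) * psi t\<bar>
      \<le> 105/4 + 2 * kp * 1 * (35/16) + (kp^2 * 1 + kp * (63/16)) * 1"
    using tri ps(5) b2 b8 by linarith
  then have "\<bar>cc k kp * (psi2 t - 2*kp*Phi1 t*psi1 t + (kp^2 * (Phi1 t)^2 - kp * Phi2 t) * psi t)\<bar>
      \<le> cc k kp * (105/4 + 2 * kp * 1 * (35/16) + (kp^2 * 1 + kp * (63/16)) * 1)" by (rule ac)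
  moreover have "cc k kp * (105/4 + 2 * kp * 1 * (35/16) + (kp^2 * 1 + kp * (63/16)) * 1) \<le> 200 * kp^2 * cc k kp"
  proof -
    have "105/4 + 2 * kp * 1 * (35/16) + (kp^2 * 1 + kp * (63/16)) * 1 = 105/4 + 133/16 * kp + kp^2"
      by (simp add: algebra_simps)
    then have "105/4 + 2 * kp * 1 * (35/16) + (kp^2 * 1 + kp * (63/16)) * 1 \<le> 200 * kp^2" using kk2 by linarith
    then show ?thesis using c0 by (simp add: mult.commute mult_left_mono)
  qed
  ultimately show "\<bar>gg2 k kp t\<bar> \<le> 200 * kp^2 * cc k kp * exp (- kp * t / 3)"
    unfolding gg2_def by (intro bnd_mul[OF _ E0 E]) auto
qed

theorem mainTheorem9:
  shows "\<exists>C::real. C \<ge> 2 \<and> (\<exists>K M::real. \<forall>k k'::int.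
    K \<le> real_of_int k \<and> k < k' \<and> k' \<le> 2 * k \<longrightarrow>
    (let c = exp (- real_of_int k / 2 + 5 * real_of_int k' / 6) in
     \<exists>u A f f' f'' g g' g''.
       transforms (\<lambda>x y t. cos (real_of_int k * x) * exp (- real_of_int k * t))
                  (\<lambda>x y t. c * cos (real_of_int k' * y) * exp (- real_of_int k' * t))
                  0 C u A \<and>
       regclass 80 60 A \<and>
       (\<forall>x y t. t \<in> {0..C} \<longrightarrow>
          u x y t = f t * cos (real_of_int k * x) + g t * cos (real_of_int k' * y)) \<and>
       (\<forall>t\<in>{0..C}. (f has_real_derivative f' t) (at t within {0..C}) \<and>
                   (f' has_real_derivative f'' t) (at t within {0..C}) \<and>
                   (g has_real_derivative g' t) (at t within {0..C}) \<and>
                   (g' has_real_derivative g'' t) (at t within {0..C})) \<and>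
       continuous_on {0..C} f'' \<and> continuous_on {0..C} g'' \<and>
       (\<forall>t\<in>{0..C}.
          \<bar>f t\<bar> \<le> M * exp (- real_of_int k * t) \<and>
          \<bar>f' t\<bar> \<le> M * real_of_int k powr (7/3) * exp (- real_of_int k * t) \<and>
          \<bar>f'' t\<bar> \<le> M * real_of_int k powr (14/3) * exp (- real_of_int k * t) \<and>
          \<bar>g t\<bar> \<le> M * c * exp (- real_of_int k' * t / 3) \<and>
          \<bar>g' t\<bar> \<le> M * real_of_int k' * c * exp (- real_of_int k' * t / 3) \<and>
          \<bar>g'' t\<bar> \<le> M * (real_of_int k')\<^sup>2 * c * exp (- real_of_int k' * t / 3)) \<and>
       (\<forall>x y t. t \<in> {0..1/100} \<longrightarrow>
          u x y t = cos (real_of_int k * x) * exp (- real_of_int k * t) \<and>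
          (\<forall>i<2. \<forall>j<2. A i j x y t = idmat i j)) \<and>
       (\<forall>x y t. t \<in> {C - 1/100..C} \<longrightarrow>
          u x y t = c * cos (real_of_int k' * y) * exp (- real_of_int k' * t) \<and>
          (\<forall>i<2. \<forall>j<2. A i j x y t = idmat i j))))"
  proof -
  have main: "let c = exp (- real_of_int k / 2 + 5 * real_of_int k' / 6) in
     \<exists>u A f f' f'' g g' g''.
       transforms (\<lambda>x y t. cos (real_of_int k * x) * exp (- real_of_int k * t))
                  (\<lambda>x y t. c * cos (real_of_int k' * y) * exp (- real_of_int k' * t))
                  0 10 u A \<and>
       regclass 80 60 A \<and>
       (\<forall>x y t. t \<in> {0..10} \<longrightarrow>
          u x y t = f t * cos (real_of_int k * x) + g t * cos (real_of_int k' * y)) \<and>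
       (\<forall>t\<in>{0..10}. (f has_real_derivative f' t) (at t within {0..10}) \<and>
                   (f' has_real_derivative f'' t) (at t within {0..10}) \<and>
                   (g has_real_derivative g' t) (at t within {0..10}) \<and>
                   (g' has_real_derivative g'' t) (at t within {0..10})) \<and>
       continuous_on {0..10} f'' \<and> continuous_on {0..10} g'' \<and>
       (\<forall>t\<in>{0..10}.
          \<bar>f t\<bar> \<le> 200 * exp (- real_of_int k * t) \<and>
          \<bar>f' t\<bar> \<le> 200 * real_of_int k powr (7/3) * exp (- real_of_int k * t) \<and>
          \<bar>f'' t\<bar> \<le> 200 * real_of_int k powr (14/3) * exp (- real_of_int k * t) \<and>
          \<bar>g t\<bar> \<le> 200 * c * exp (- real_of_int k' * t / 3) \<and>
          \<bar>g' t\<bar> \<le> 200 * real_of_int k' * c * exp (- real_of_int k' * t / 3) \<and>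
          \<bar>g'' t\<bar> \<le> 200 * (real_of_int k')\<^sup>2 * c * exp (- real_of_int k' * t / 3)) \<and>
       (\<forall>x y t. t \<in> {0..1/100} \<longrightarrow>
          u x y t = cos (real_of_int k * x) * exp (- real_of_int k * t) \<and>
          (\<forall>i<2. \<forall>j<2. A i j x y t = idmat i j)) \<and>
       (\<forall>x y t. t \<in> {10 - 1/100..10} \<longrightarrow>
          u x y t = c * cos (real_of_int k' * y) * exp (- real_of_int k' * t) \<and>
          (\<forall>i<2. \<forall>j<2. A i j x y t = idmat i j))"
    if hk: "10^10 \<le> real_of_int k" "k < k'" "k' \<le> 2 * k" for k k' :: int
  proof -
    define kr where "kr = real_of_int k"
    define kpr where "kpr = real_of_int k'"
    have k: "kr \<ge> 10^10" "kr < kpr" "kpr \<le> 2 * kr" using hk by (simp_all add: kr_def kpr_def)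
    have kne: "kr \<noteq> 0" "kpr \<noteq> 0" using k by auto
    have cE: "exp (- kr / 2 + 5 * kpr / 6) = cc kr kpr" by (simp add: cc_def)
    have tr: "transforms (\<lambda>x y t. cos (kr * x) * exp (- kr * t))
                  (\<lambda>x y t. cc kr kpr * cos (kpr * y) * exp (- kpr * t)) 0 10 (uu kr kpr) (AA kr kpr)"
      unfolding transforms_def
    proof (intro conjI allI impI)
      show "C2_fun (uu kr kpr)" by (rule C2_uu)
      show "periodic2 (uu kr kpr)" unfolding kr_def kpr_def by (rule per_uu)
      show "C1_fun (AA kr kpr i j)" for i j by (rule C1_AA)
      show "periodic2 (AA kr kpr i j)" for i j unfolding kr_def kpr_def by (rule per_AA)
      show "part 2 (part 2 (uu kr kpr)) x y t + div_form (AA kr kpr) (uu kr kpr) x y t = 0" for x y t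
        by (rule pde[OF kne])
      show "uu kr kpr x y t = cos (kr * x) * exp (- kr * t)" if "t \<le> 0" for x y t
        using that by (intro uu_lo) simp
      show "AA kr kpr i j x y t = idmat i j" if "t \<le> 0" "i < 2" "j < 2" for x y t i j
        using that by (intro AA_id) auto
      show "uu kr kpr x y t = cc kr kpr * cos (kpr * y) * exp (- kpr * t)" if "10 \<le> t" for x y t
        using that by (intro uu_hi) simp
      show "AA kr kpr i j x y t = idmat i j" if "10 \<le> t" "i < 2" "j < 2" for x y t i j
        using that by (intro AA_id) auto
    qed
    have bnds: "\<forall>t\<in>{0..10}.
          \<bar>ff kr t\<bar> \<le> 200 * exp (- kr * t) \<and>
          \<bar>ff1 kr t\<bar> \<le> 200 * kr powr (7/3) * exp (- kr * t) \<and>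
          \<bar>ff2 kr t\<bar> \<le> 200 * kr powr (14/3) * exp (- kr * t) \<and>
          \<bar>gg kr kpr t\<bar> \<le> 200 * cc kr kpr * exp (- kpr * t / 3) \<and>
          \<bar>gg1 kr kpr t\<bar> \<le> 200 * kpr * cc kr kpr * exp (- kpr * t / 3) \<and>
          \<bar>gg2 kr kpr t\<bar> \<le> 200 * kpr\<^sup>2 * cc kr kpr * exp (- kpr * t / 3)"
    proof
      fix t :: real assume "t \<in> {0..10}"
      then have t: "t \<ge> 0" by simp
      have kp1: "kpr \<ge> 1" using k by simp
      show "\<bar>ff kr t\<bar> \<le> 200 * exp (- kr * t) \<and>
          \<bar>ff1 kr t\<bar> \<le> 200 * kr powr (7/3) * exp (- kr * t) \<and>
          \<bar>ff2 kr t\<bar> \<le> 200 * kr powr (14/3) * exp (- kr * t) \<and>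
          \<bar>gg kr kpr t\<bar> \<le> 200 * cc kr kpr * exp (- kpr * t / 3) \<and>
          \<bar>gg1 kr kpr t\<bar> \<le> 200 * kpr * cc kr kpr * exp (- kpr * t / 3) \<and>
          \<bar>gg2 kr kpr t\<bar> \<le> 200 * kpr\<^sup>2 * cc kr kpr * exp (- kpr * t / 3)"
        using f_b[OF k(1) t] g_b[OF kp1 t, of kr] by simp
    qed
    have lo: "\<forall>x y t. t \<in> {0..1/100} \<longrightarrow>
          uu kr kpr x y t = cos (kr * x) * exp (- kr * t) \<and>
          (\<forall>i<2. \<forall>j<2. AA kr kpr i j x y t = idmat i j)"
    proof (intro allI impI conjI)
      fix x y t :: real and i j :: nat assume "t \<in> {0..1/100}"
      then have "t \<le> 1/100" by simp
      then show "uu kr kpr x y t = cos (kr * x) * exp (- kr * t)" by (rule uu_lo)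
      show "i < 2 \<Longrightarrow> j < 2 \<Longrightarrow> AA kr kpr i j x y t = idmat i j" using \<open>t \<le> 1/100\<close> by (intro AA_id) auto
    qed
    have hi: "\<forall>x y t. t \<in> {10 - 1/100..10} \<longrightarrow>
          uu kr kpr x y t = cc kr kpr * cos (kpr * y) * exp (- kpr * t) \<and>
          (\<forall>i<2. \<forall>j<2. AA kr kpr i j x y t = idmat i j)"
    proof (intro allI impI conjI)
      fix x y t :: real and i j :: nat assume "t \<in> {10 - 1/100..10}"
      then have "t \<ge> 999/100" by simp
      then show "uu kr kpr x y t = cc kr kpr * cos (kpr * y) * exp (- kpr * t)" by (rule uu_hi)
      show "i < 2 \<Longrightarrow> j < 2 \<Longrightarrow> AA kr kpr i j x y t = idmat i j" using \<open>t \<ge> 999/100\<close> by (intro AA_id) auto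
    qed
    have dec: "\<forall>x y t. t \<in> {0..10} \<longrightarrow> uu kr kpr x y t = ff kr t * cos (kr * x) + gg kr kpr t * cos (kpr * y)"
      by (simp add: uu_def sep2_def)
    have ders: "\<forall>t\<in>{0..10}. (ff kr has_real_derivative ff1 kr t) (at t within {0..10}) \<and>
                   (ff1 kr has_real_derivative ff2 kr t) (at t within {0..10}) \<and>
                   (gg kr kpr has_real_derivative gg1 kr kpr t) (at t within {0..10}) \<and>
                   (gg1 kr kpr has_real_derivative gg2 kr kpr t) (at t within {0..10})"
      using ff_d ff1_d gg_d gg1_d by blast
    have cts: "continuous_on {0..10} (ff2 kr)" "continuous_on {0..10} (gg2 kr kpr)"
      using cD(1,2) continuous_on_subset by blast+
    show ?thesis
      unfolding Let_def kr_def[symmetric] kpr_def[symmetric] cE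
      by (rule exI[of _ "uu kr kpr"], rule exI[of _ "AA kr kpr"], rule exI[of _ "ff kr"], rule exI[of _ "ff1 kr"],
          rule exI[of _ "ff2 kr"], rule exI[of _ "gg kr kpr"], rule exI[of _ "gg1 kr kpr"], rule exI[of _ "gg2 kr kpr"])
         (intro conjI tr reg[OF k] dec ders cts bnds lo hi)
  qed
  show ?thesis
    by (rule exI[of _ 10], rule conjI, simp, rule exI[of _ "10^10"], rule exI[of _ 200])
       (use main in blast)
qed

end
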